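(* Let the training sample $(X_i,Y_i)$, $i=1,\dots,n$, be i.i.d. with $X_i\sim\mu$ and $Y_i=f^\star(X_i)+\xi_i$, where $f^\star\in L_2(\mu)$ is $\mathcal{G}$-invariant, $\mathbb{E}[\xi_i\mid X_1,\dots,X_n]=0$ and $\mathbb{E}[\xi_i\xi_j\mid X_1,\dots,X_n]=\sigma^2\delta_{ij}<\infty$. Similarly let $X\sim\mu$ and $Y=f^\star(X)+\xi$ with $\mathbb{E}[\xi\mid X]=0$ and $\mathbb{E}[\xi^2]=\sigma^2$. Let $\rho>0$ and let $f$ be the kernel ridge regression solution $f(x)=k_{\mathbf{X}}(x)^\top(K+\rho I)^{-1}\mathbf{Y}$, where $K_{ij}=k(X_i,X_j)$, $k_{\mathbf{X}}(x)_i=k(X_i,x)$, $\mathbf{Y}_i=Y_i$ (this is the unique minimiser over $h\in\mathcal{H}$ of $\sum_{i=1}^n(h(X_i)-Y_i)^2+\rho\|h\|_\mathcal{H}^2$). Let $\bar f=\mathcal{O}\iota f$ and let $f'\in L_2(\mu)$ be any predictor with $R[f']\le R[\bar f]$. Then \[\mathbb{E}[R[f]-R[f']]\ge\mathbb{E}\big[\|(\mathrm{id}-\mathcal{O})\iota\Lambda_{n,\rho}f^\star\|_\mu^2\big]+\sigma^2\frac{\|k^\perp\|^2_{L_2(\mu\otimes\mu)}}{(\sqrt nM_k+\rho/\sqrt n)^2},\] where $\Lambda_{n,\rho}f^\star\in\mathcal{H}$ is the solution of the noiseless problem $\operatorname{argmin}_{h\in\mathcal{H}}\sum_{i=1}^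n(h(X_i)-f^\star(X_i))^2+\rho\|h\|_\mathcal{H}^2$.
   Context: $\mathcal{G}$ is a compact, second countable, Hausdorff topological group with Haar probability measure $\lambda$, acting measurably on a nonempty Polish space $\mathcal{X}$. $\mu$ is a $\mathcal{G}$-invariant Borel probability measure on $\mathcal{X}$ with $\mathrm{supp}\,\mu=\mathcal{X}$. $k:\mathcal{X}\times\mathcal{X}\to\mathbb{R}$ is a measurable symmetric positive definite kernel with reproducing kernel Hilbert space $\mathcal{H}$, such that $k(\cdot,x)$ is continuous for every $x$ and $M_k=\sup_xk(x,x)<\infty$. $\iota:\mathcal{H}\to L_2(\mu)$ is the inclusion map. $\mathcal{O}h(x)=\int_\mathcal{G}h(gx)\,d\lambda(g)$ on $L_2(\mu)$, with $\|\cdot\|_\mu$ the $L_2(\mu)$ norm. $k^\perp(x,y)=k(x,y)-\int_\mathcal{G}k(x,gy)\,d\lambda(g)$ and for measurable $j:\mathcal{X}\times\mathcal{X}\to\mathbb{R}$, $\|j\|^2_{L_2(\mu\otimes\mu)}=\int\int j(x,y)^2d\mu(x)d\mu(y)$. The risk of a predictor $h$ is $R[h]=\mathbb{E}[(h(X)-Y)^2]$ conditional on the training sample; the outer expectation is over the training sample. *)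

theory Defs
  imports "HOL-Analysis.Analysis" "HOL-Probability.Probability"
begin

text \<open>Haar probability measure on a compact (second countable Hausdorff) topological group,
  written additively (group_add is not assumed commutative): a left-invariant Borel
  probability measure.\<close>
definition haar_prob :: "'g::topological_group_add measure \<Rightarrow> bool" where
  "haar_prob lam \<longleftrightarrow> prob_space lam \<and> sets lam = sets borel \<and>
     (\<forall>g. distr lam borel (\<lambda>h. g + h) = lam)"

definition measurable_action :: "('g::{group_add,topological_space} \<Rightarrow> 'x::topological_space \<Rightarrow> 'x) \<Rightarrow> bool" where
  "measurable_action act \<longleftrightarrow>
     (\<forall>x. act 0 x = x) \<and> (\<forall>g h x. act (g + h) x = act g (act h x)) \<and>
     (\<lambda>(g, x). act g x) \<in> measurable (borel \<Otimes>\<^sub>M borel) (borel :: 'x measure)"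

definition measure_support :: "'x::topological_space measure \<Rightarrow> 'x set" where
  "measure_support M = {x. \<forall>U. open U \<and> x \<in> U \<longrightarrow> emeasure M U > 0}"

definition pd_kernel :: "('x \<Rightarrow> 'x \<Rightarrow> real) \<Rightarrow> bool" where
  "pd_kernel k \<longleftrightarrow> (\<forall>x y. k x y = k y x) \<and>
     (\<forall>(xs :: 'x list) (c :: real list). length c = length xs \<longrightarrow>
        (\<Sum>i<length xs. \<Sum>j<length xs. c!i * c!j * k (xs!i) (xs!j)) \<ge> 0)"

text \<open>Kernel ridge regression solution f(x) = k_X(x)^T (K + rho I)^{-1} Y for a sample indexed
  by the finite type 'n (sample size n = CARD('n)).\<close>
definition krr :: "('x \<Rightarrow> 'x \<Rightarrow> real) \<Rightarrow> real \<Rightarrow> ('n::finite \<Rightarrow> 'x) \<Rightarrow> real^'n \<Rightarrow> 'x \<Rightarrow> real" where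
  "krr k \<rho> Xs Ys x =
     (\<chi> i. k (Xs i) x) \<bullet> (matrix_inv ((\<chi> i j. k (Xs i) (Xs j)) + \<rho> *\<^sub>R mat 1) *v Ys)"

definition orbit_avg :: "'g measure \<Rightarrow> ('g \<Rightarrow> 'x \<Rightarrow> 'x) \<Rightarrow> ('x \<Rightarrow> real) \<Rightarrow> 'x \<Rightarrow> real" where
  "orbit_avg lam act h x = (\<integral>g. h (act g x) \<partial>lam)"

definition kperp :: "'g measure \<Rightarrow> ('g \<Rightarrow> 'x \<Rightarrow> 'x) \<Rightarrow> ('x \<Rightarrow> 'x \<Rightarrow> real) \<Rightarrow> 'x \<Rightarrow> 'x \<Rightarrow> real" where
  "kperp lam act k x y = k x y - (\<integral>g. k x (act g y) \<partial>lam)"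

definition L2_norm_sq :: "'x measure \<Rightarrow> ('x \<Rightarrow> real) \<Rightarrow> real" where
  "L2_norm_sq M h = (\<integral>x. (h x)\<^sup>2 \<partial>M)"

definition L2_norm_sq2 :: "'x measure \<Rightarrow> ('x \<Rightarrow> 'x \<Rightarrow> real) \<Rightarrow> real" where
  "L2_norm_sq2 M j = (\<integral>x. (\<integral>y. (j x y)\<^sup>2 \<partial>M) \<partial>M)"

text \<open>Risk R[h] = E[(h(X) - Y)^2] for a test pair (X,Y) = (Xt, fstar(Xt) + xit) living on the
  probability space Q, independent of the training sample (which lives on a different space).\<close>
definition risk :: "'q measure \<Rightarrow> ('q \<Rightarrow> 'x) \<Rightarrow> ('q \<Rightarrow> real) \<Rightarrow> ('x \<Rightarrow> real) \<Rightarrow> ('x \<Rightarrow> real) \<Rightarrow> real" where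
  "risk Q Xt xit fstar h = (\<integral>q. (h (Xt q) - (fstar (Xt q) + xit q))\<^sup>2 \<partial>Q)"

end

theory Submission
  imports Defs
begin
lemma pd_sym: "pd_kernel k \<Longrightarrow> k x y = k y x"
  unfolding pd_kernel_def by blast

lemma pd_list: "pd_kernel k \<Longrightarrow> length cs = length xs \<Longrightarrow>
      0 \<le> (\<Sum>i<length xs. \<Sum>j<length xs. cs!i * cs!j * k (xs!i) (xs!j))"
  unfolding pd_kernel_def by blast

lemma pd_vec:
  fixes Xs :: "'n::finite \<Rightarrow> 'x" and c :: "real^'n"
  assumes "pd_kernel k"
  shows "0 \<le> (\<Sum>i\<in>UNIV. \<Sum>j\<in>UNIV. c$i * c$j * k (Xs i) (Xs j))"
proof -
  obtain es where es: "distinct es" "set es = (UNIV::'n set)"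
    using finite_distinct_list[of "UNIV::'n set"] by auto
  have b: "bij_betw ((!) es) {..<length es} UNIV"
    using bij_betw_nth[OF es(1) refl es(2)[symmetric]] .
  note H = pd_list[OF assms]
  have "0 \<le> (\<Sum>i<length (map Xs es). \<Sum>j<length (map Xs es).
     (map (($) c) es)!i * (map (($) c) es)!j * k ((map Xs es)!i) ((map Xs es)!j))"
    by (rule H) simp
  also have "\<dots> = (\<Sum>i<length es. \<Sum>j<length es. c$(es!i) * c$(es!j) * k (Xs (es!i)) (Xs (es!j)))"
    by simp
  also have "\<dots> = (\<Sum>i<length es. \<Sum>j\<in>UNIV. c$(es!i) * c$j * k (Xs (es!i)) (Xs j))"
    by (intro sum.cong refl) (rule sum.reindex_bij_betw[OF b])
  also have "\<dots> = (\<Sum>i\<in>UNIV. \<Sum>j\<in>UNIV. c$i * c$j * k (Xs i) (Xs j))"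
    by (rule sum.reindex_bij_betw[OF b])
  finally show ?thesis .
qed

lemma pd_two:
  assumes "pd_kernel k"
  shows "0 \<le> a*a*k x x + 2*a*b*k x y + b*b*k y y"
proof -
  have "0 \<le> (\<Sum>i<length [x,y]. \<Sum>j<length [x,y]. [a,b]!i * [a,b]!j * k ([x,y]!i) ([x,y]!j))"
    by (rule pd_list[OF assms]) simp
  also have "\<dots> = a*a*k x x + a*b*k x y + b*a*k y x + b*b*k y y"
    by (simp add: numeral_2_eq_2)
  also have "k y x = k x y" by (rule pd_sym[OF assms])
  finally show ?thesis by (simp add: algebra_simps)
qed

lemma pd_diag_nonneg: "pd_kernel k \<Longrightarrow> 0 \<le> k x x"
  using pd_two[of k 1 x 0 x] by simp

lemma pd_abs_bound:
  assumes "pd_kernel k" "\<And>z. k z z \<le> M" shows "\<bar>k x y\<bar> \<le> M"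
proof -
  have 1: "0 \<le> k x x - 2 * k x y + k y y" using pd_two[OF assms(1), of 1 x "-1" y] by simp
  have 2: "0 \<le> k x x + 2 * k x y + k y y" using pd_two[OF assms(1), of 1 x 1 y] by simp
  have "k x x \<le> M" "k y y \<le> M" using assms(2) by auto
  then have "k x y \<le> M" "- k x y \<le> M" using 1 2 by linarith+
  then show ?thesis by (simp only: abs_le_iff)
qed

definition Amat :: "('x \<Rightarrow> 'x \<Rightarrow> real) \<Rightarrow> real \<Rightarrow> ('n::finite \<Rightarrow> 'x) \<Rightarrow> real^'n^'n" where
  "Amat k \<rho> Xs = (\<chi> i j. k (Xs i) (Xs j)) + \<rho> *\<^sub>R mat 1"

lemma Amat_quad:
  fixes v :: "real^'n::finite"
  assumes "pd_kernel k"
  shows "\<rho> * (v \<bullet> v) \<le> v \<bullet> (Amat k \<rho> Xs *v v)"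
proof -
  have "Amat k \<rho> Xs *v v = (\<chi> i j. k (Xs i) (Xs j)) *v v + \<rho> *\<^sub>R v"
    by (simp add: Amat_def matrix_vector_mult_add_rdistrib scaleR_matrix_vector_assoc[symmetric])
  then have "v \<bullet> (Amat k \<rho> Xs *v v) = v \<bullet> ((\<chi> i j. k (Xs i) (Xs j)) *v v) + \<rho> * (v \<bullet> v)"
    by (simp add: inner_add_right)
  also have "v \<bullet> ((\<chi> i j. k (Xs i) (Xs j)) *v v) = (\<Sum>i\<in>UNIV. \<Sum>j\<in>UNIV. v$i * v$j * k (Xs i) (Xs j))"
    by (simp add: inner_vec_def matrix_vector_mult_def sum_distrib_left mult_ac)
  finally have "v \<bullet> (Amat k \<rho> Xs *v v) = (\<Sum>i\<in>UNIV. \<Sum>j\<in>UNIV. v$i * v$j * k (Xs i) (Xs j)) + \<rho> * (v \<bullet> v)" .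
  then show ?thesis using pd_vec[OF assms, of v Xs] by simp
qed

lemma Amat_invertible:
  assumes "pd_kernel k" "\<rho> > 0"
  shows "invertible (Amat k \<rho> (Xs::'n::finite \<Rightarrow> 'x))"
proof -
  have "\<forall>v. Amat k \<rho> Xs *v v = 0 \<longrightarrow> v = 0"
  proof (intro allI impI)
    fix v assume "Amat k \<rho> Xs *v v = 0"
    then have "\<rho> * (v \<bullet> v) \<le> 0" using Amat_quad[OF assms(1), of \<rho> v Xs] by simp
    then have "v \<bullet> v \<le> 0" using assms(2) by (simp add: mult_le_0_iff)
    then show "v = 0" by (metis antisym inner_ge_zero inner_eq_zero_iff)
  qed
  then show ?thesis using matrix_left_invertible_ker invertible_left_inverse by blast
qed

lemma matrix_inv_props:
  fixes A :: "real^'n::finite^'n"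
  assumes "invertible A"
  shows "A ** matrix_inv A = mat 1" "matrix_inv A ** A = mat 1"
  using someI_ex[OF assms[unfolded invertible_def]] unfolding matrix_inv_def by auto

lemma Ainv_norm:
  assumes "pd_kernel k" "\<rho> > 0"
  shows "\<rho> * norm (matrix_inv (Amat k \<rho> (Xs::'n::finite \<Rightarrow> 'x)) *v e) \<le> norm e"
proof -
  let ?A = "Amat k \<rho> Xs"
  define w where "w = matrix_inv ?A *v e"
  have Aw: "?A *v w = e" unfolding w_def
    using matrix_inv_props(1)[OF Amat_invertible[OF assms]]
    by (metis matrix_vector_mul_assoc matrix_vector_mul_lid)
  have "\<rho> * (norm w * norm w) = \<rho> * (w \<bullet> w)" by (simp add: norm_eq_sqrt_inner)
  also have "\<dots> \<le> w \<bullet> e" using Amat_quad[OF assms(1), of \<rho> w Xs] Aw by simp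
  also have "\<dots> \<le> norm w * norm e" by (rule norm_cauchy_schwarz)
  finally have *: "\<rho> * (norm w * norm w) \<le> norm w * norm e" .
  have "\<rho> * norm w \<le> norm e"
  proof (cases "norm w = 0")
    case True then show ?thesis by simp
  next
    case False
    then have "norm w > 0" by simp
    with * have "(\<rho> * norm w) * norm w \<le> norm e * norm w" by (metis mult.assoc mult.commute)
    then show ?thesis using \<open>norm w > 0\<close> by (rule mult_right_le_imp_le)
  qed
  then show ?thesis unfolding w_def .
qed

lemma axis_col: "((B::real^'n::finite^'m::finite) *v axis j 1) $ i = B $ i $ j"
  unfolding matrix_vector_mult_basis column_def by (rule vec_lambda_beta)

lemma Ainv_entry_bound:
  assumes "pd_kernel k" "\<rho> > 0"
  shows "\<bar>matrix_inv (Amat k \<rho> (Xs::'n::finite \<Rightarrow> 'x)) $ i $ j\<bar> \<le> 1 / \<rho>"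
proof -
  let ?B = "matrix_inv (Amat k \<rho> Xs)"
  have "\<bar>(?B *v axis j 1) $ i\<bar> \<le> norm (?B *v axis j 1)" by (rule component_le_norm_cart)
  also have "\<rho> * norm (?B *v axis j 1) \<le> 1" using Ainv_norm[OF assms, of Xs "axis j 1"] by (simp only: norm_axis_1)
  then have "norm (?B *v axis j 1) \<le> 1 / \<rho>" using assms(2) by (simp add: pos_le_divide_eq mult.commute)
  finally show ?thesis unfolding axis_col .
qed

lemma Ainv_cramer:
  assumes "pd_kernel k" "\<rho> > 0"
  shows "matrix_inv (Amat k \<rho> (Xs::'n::finite \<Rightarrow> 'x)) $ i $ j =
     det (\<chi> r c. if c = i then axis j 1 $ r else Amat k \<rho> Xs $ r $ c) / det (Amat k \<rho> Xs)"
proof -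
  let ?A = "Amat k \<rho> Xs"
  let ?B = "matrix_inv ?A"
  define F where "F = (\<lambda>c. det (\<chi> r c'. if c' = c then axis j 1 $ r else ?A $ r $ c') / det ?A)"
  have inv: "invertible ?A" by (rule Amat_invertible[OF assms])
  have d: "det ?A \<noteq> 0" using inv by (simp add: invertible_det_nz)
  have "?A *v (?B *v axis j 1) = axis j 1"
    using matrix_inv_props(1)[OF inv] by (metis matrix_vector_mul_assoc matrix_vector_mul_lid)
  then have H: "?B *v axis j 1 = (\<chi> c. F c)"
    unfolding F_def by (rule iffD1[OF cramer[OF d]])
  have "?B $ i $ j = (?B *v axis j 1) $ i"
    by (rule axis_col[symmetric])
  also have "\<dots> = (\<chi> c. F c) $ i" using H by (rule arg_cong)
  also have "\<dots> = F i" by (rule vec_lambda_beta)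
  finally show ?thesis unfolding F_def .
qed

lemma uminus_borel_meas: "(uminus :: 'g::{topological_group_add, second_countable_topology} \<Rightarrow> 'g) \<in> borel_measurable borel"
  by (rule borel_measurable_continuous_onI) (intro continuous_intros)

lemma haar_right:
  fixes lam :: "'g::{topological_group_add, second_countable_topology} measure"
  assumes "haar_prob lam"
  shows "distr lam borel (\<lambda>h. h + g0) = lam"
proof -
  have P: "prob_space lam" and S[measurable_cong]: "sets lam = sets borel"
    and L: "\<And>g. distr lam borel (\<lambda>h. g + h) = lam"
    using assms unfolding haar_prob_def by auto
  interpret prob_space lam by (rule P)
  have um[measurable]: "(uminus :: 'g \<Rightarrow> 'g) \<in> borel_measurable borel" by (rule uminus_borel_meas)
  define Li where "Li = distr lam borel uminus"
  have SLi[measurable_cong]: "sets Li = sets borel" unfolding Li_def by simp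
  have Li_prob: "prob_space Li" unfolding Li_def by (rule prob_space_distr) measurable
  interpret Li: prob_space Li by (rule Li_prob)
  interpret pair_sigma_finite lam Li
    by (simp add: pair_sigma_finite_def prob_space_imp_sigma_finite Li_prob P)
  have leftnn: "(\<integral>\<^sup>+y. f y \<partial>lam) = (\<integral>\<^sup>+y. f (c + y) \<partial>lam)"
    if [measurable]: "f \<in> borel_measurable borel" for f :: "'g \<Rightarrow> ennreal" and c
  proof -
    have "(\<integral>\<^sup>+y. f y \<partial>lam) = (\<integral>\<^sup>+y. f y \<partial>distr lam borel (\<lambda>h. c + h))" by (simp add: L)
    also have "\<dots> = (\<integral>\<^sup>+y. f (c + y) \<partial>lam)" by (rule nn_integral_distr) measurable
    finally show ?thesis .
  qed
  have key: "(\<integral>\<^sup>+y. f y \<partial>lam) = (\<integral>\<^sup>+y. f (- y) \<partial>lam)"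
    if [measurable]: "f \<in> borel_measurable borel" for f :: "'g \<Rightarrow> ennreal"
  proof -
    have "(\<integral>\<^sup>+x. f x \<partial>lam) = (\<integral>\<^sup>+y. (\<integral>\<^sup>+x. f x \<partial>lam) \<partial>Li)"
      by (simp add: Li.emeasure_space_1)
    also have "\<dots> = (\<integral>\<^sup>+y. (\<integral>\<^sup>+x. f (y + x) \<partial>lam) \<partial>Li)"
      by (intro nn_integral_cong leftnn) measurable
    also have "\<dots> = (\<integral>\<^sup>+x. (\<integral>\<^sup>+y. f (y + x) \<partial>Li) \<partial>lam)"
      by (rule Fubini') measurable
    also have "\<dots> = (\<integral>\<^sup>+x. (\<integral>\<^sup>+y. f (- y + x) \<partial>lam) \<partial>lam)"
      unfolding Li_def by (intro nn_integral_cong nn_integral_distr) measurable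
    also have "\<dots> = (\<integral>\<^sup>+x. (\<integral>\<^sup>+y. f (- (x + y) + x) \<partial>lam) \<partial>lam)"
      by (intro nn_integral_cong leftnn) measurable
    also have "\<dots> = (\<integral>\<^sup>+x. (\<integral>\<^sup>+y. f (- y) \<partial>lam) \<partial>lam)"
      by (simp add: minus_add add.assoc)
    also have "\<dots> = (\<integral>\<^sup>+y. f (- y) \<partial>lam)"
      by (simp add: emeasure_space_1)
    finally show ?thesis .
  qed
  have main: "(\<integral>\<^sup>+y. f (y + g0) \<partial>lam) = (\<integral>\<^sup>+y. f y \<partial>lam)"
    if [measurable]: "f \<in> borel_measurable borel" for f :: "'g \<Rightarrow> ennreal"
  proof -
    have "(\<integral>\<^sup>+y. f (y + g0) \<partial>lam) = (\<integral>\<^sup>+y. f (- y + g0) \<partial>lam)"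
      by (rule key) measurable
    also have "\<dots> = (\<integral>\<^sup>+y. f (- (g0 + y) + g0) \<partial>lam)"
      by (rule leftnn) measurable
    also have "\<dots> = (\<integral>\<^sup>+y. f (- y) \<partial>lam)"
      by (simp add: minus_add add.assoc)
    also have "\<dots> = (\<integral>\<^sup>+y. f y \<partial>lam)" by (rule key[symmetric]) measurable
    finally show ?thesis .
  qed
  show ?thesis
  proof (rule measure_eqI)
    show "sets (distr lam borel (\<lambda>h. h + g0)) = sets lam" by (simp add: S)
    fix A assume "A \<in> sets (distr lam borel (\<lambda>h. h + g0))"
    then have A[measurable]: "A \<in> sets borel" by simp
    have "emeasure (distr lam borel (\<lambda>h. h + g0)) A = (\<integral>\<^sup>+y. indicator A y \<partial>distr lam borel (\<lambda>h. h + g0))"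
      by (simp add: nn_integral_indicator)
    also have "\<dots> = (\<integral>\<^sup>+y. indicator A (y + g0) \<partial>lam)" by (rule nn_integral_distr) measurable
    also have "\<dots> = (\<integral>\<^sup>+y. indicator A y \<partial>lam)" by (rule main) measurable
    also have "\<dots> = emeasure lam A" by (simp add: nn_integral_indicator)
    finally show "emeasure (distr lam borel (\<lambda>h. h + g0)) A = emeasure lam A" .
  qed
qed

lemma prob_integral_abs_le:
  assumes "prob_space M" "\<And>x. \<bar>f x\<bar> \<le> C"
  shows "\<bar>\<integral>x. f x \<partial>M\<bar> \<le> (C::real)"
proof -
  interpret prob_space M by fact
  have C: "0 \<le> C" using assms(2)[of undefined] by linarith
  have "\<bar>\<integral>x. f x \<partial>M\<bar> \<le> (\<integral>x. \<bar>f x\<bar> \<partial>M)" by (rule integral_abs_bound)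
  also have "\<dots> \<le> C"
  proof (cases "integrable M (\<lambda>x. \<bar>f x\<bar>)")
    case True then show ?thesis using assms(2) by (intro integral_le_const) auto
  next
    case False then show ?thesis using C by (simp add: not_integrable_integral_eq)
  qed
  finally show ?thesis .
qed

lemma integrable_bdd:
  assumes "finite_measure M" "f \<in> borel_measurable M" "\<And>x. \<bar>f x\<bar> \<le> (C::real)"
  shows "integrable M f"
  using finite_measure.integrable_const_bound[OF assms(1), of f C] assms(2,3) by auto

lemma integrable_bdd_mult:
  fixes f g :: "'a \<Rightarrow> real"
  assumes "integrable M g" "f \<in> borel_measurable M" "\<And>x. \<bar>f x\<bar> \<le> C"
  shows "integrable M (\<lambda>x. f x * g x)"
proof (rule Bochner_Integration.integrable_bound[where f="\<lambda>x. C * \<bar>g x\<bar>"])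
  show "integrable M (\<lambda>x. C * \<bar>g x\<bar>)" using assms(1) by simp
  show "(\<lambda>x. f x * g x) \<in> borel_measurable M" using assms(1,2) by measurable
  show "AE x in M. norm (f x * g x) \<le> norm (C * \<bar>g x\<bar>)"
  proof (rule AE_I2)
    fix x
    have "\<bar>f x * g x\<bar> = \<bar>f x\<bar> * \<bar>g x\<bar>" by (simp add: abs_mult)
    also have "\<dots> \<le> C * \<bar>g x\<bar>" by (rule mult_right_mono[OF assms(3)]) simp
    also have "\<dots> \<le> \<bar>C * \<bar>g x\<bar>\<bar>" by simp
    finally show "norm (f x * g x) \<le> norm (C * \<bar>g x\<bar>)" by simp
  qed
qed

lemma abs_prod_le_sq: "\<bar>(a::real) * b\<bar> \<le> a\<^sup>2 + b\<^sup>2"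
proof -
  have "2 * \<bar>a\<bar> * \<bar>b\<bar> \<le> \<bar>a\<bar>\<^sup>2 + \<bar>b\<bar>\<^sup>2" using sum_squares_bound[of "\<bar>a\<bar>" "\<bar>b\<bar>"] by simp
  moreover have "0 \<le> \<bar>a\<bar> * \<bar>b\<bar>" by simp
  ultimately have "\<bar>a\<bar> * \<bar>b\<bar> \<le> \<bar>a\<bar>\<^sup>2 + \<bar>b\<bar>\<^sup>2" by linarith
  then show ?thesis by (simp add: abs_mult)
qed

lemma integrable_L2_prod:
  fixes f g :: "'a \<Rightarrow> real"
  assumes "integrable M (\<lambda>x. (f x)\<^sup>2)" "integrable M (\<lambda>x. (g x)\<^sup>2)"
    "f \<in> borel_measurable M" "g \<in> borel_measurable M"
  shows "integrable M (\<lambda>x. f x * g x)"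
proof (rule Bochner_Integration.integrable_bound[where f="\<lambda>x. (f x)\<^sup>2 + (g x)\<^sup>2"])
  show "integrable M (\<lambda>x. (f x)\<^sup>2 + (g x)\<^sup>2)" using assms(1,2) by simp
  show "(\<lambda>x. f x * g x) \<in> borel_measurable M" using assms(3,4) by measurable
  show "AE x in M. norm (f x * g x) \<le> norm ((f x)\<^sup>2 + (g x)\<^sup>2)"
    using abs_prod_le_sq by (intro AE_I2) (simp add: abs_prod_le_sq)
qed

lemma integrable_L2_L1:
  fixes f :: "'a \<Rightarrow> real"
  assumes "finite_measure M" "integrable M (\<lambda>x. (f x)\<^sup>2)" "f \<in> borel_measurable M"
  shows "integrable M f"
proof -
  have "integrable M (\<lambda>x. f x * 1)"
    by (rule integrable_L2_prod[OF assms(2)]) (auto intro: finite_measure.integrable_const[OF assms(1)] assms(3))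
  then show ?thesis by simp
qed

definition Ainv :: "('x \<Rightarrow> 'x \<Rightarrow> real) \<Rightarrow> real \<Rightarrow> ('n::finite \<Rightarrow> 'x) \<Rightarrow> real^'n^'n" where
  "Ainv k \<rho> xs = matrix_inv (Amat k \<rho> xs)"

definition acoef :: "('x \<Rightarrow> 'x \<Rightarrow> real) \<Rightarrow> real \<Rightarrow> ('n::finite \<Rightarrow> 'x) \<Rightarrow> 'n \<Rightarrow> 'x \<Rightarrow> real" where
  "acoef k \<rho> xs j x = (\<Sum>i\<in>UNIV. k (xs i) x * Ainv k \<rho> xs $ i $ j)"

definition dfun :: "'g measure \<Rightarrow> ('g \<Rightarrow> 'x \<Rightarrow> 'x) \<Rightarrow> ('x \<Rightarrow> 'x \<Rightarrow> real) \<Rightarrow> real \<Rightarrow> ('n::finite \<Rightarrow> 'x) \<Rightarrow> 'n \<Rightarrow> 'x \<Rightarrow> real" where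
  "dfun lam act k \<rho> xs j x = acoef k \<rho> xs j x - orbit_avg lam act (acoef k \<rho> xs j) x"

definition Dmat :: "'g measure \<Rightarrow> ('g \<Rightarrow> 'x \<Rightarrow> 'x) \<Rightarrow> 'x measure \<Rightarrow> ('x \<Rightarrow> 'x \<Rightarrow> real) \<Rightarrow> real \<Rightarrow> ('n::finite \<Rightarrow> 'x) \<Rightarrow> 'n \<Rightarrow> 'n \<Rightarrow> real" where
  "Dmat lam act mu k \<rho> xs i j = (\<integral>x. dfun lam act k \<rho> xs i x * dfun lam act k \<rho> xs j x \<partial>mu)"

definition Vfun :: "'g measure \<Rightarrow> ('g \<Rightarrow> 'x \<Rightarrow> 'x) \<Rightarrow> 'x measure \<Rightarrow> ('x \<Rightarrow> 'x \<Rightarrow> real) \<Rightarrow> 'x \<Rightarrow> real" where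
  "Vfun lam act mu k y = (\<integral>x. (kperp lam act k y x)\<^sup>2 \<partial>mu)"

lemma det_meas:
  fixes Mf :: "'a \<Rightarrow> real^'n::finite^'n"
  assumes "\<And>r c. (\<lambda>z. Mf z $ r $ c) \<in> borel_measurable M"
  shows "(\<lambda>z. det (Mf z)) \<in> borel_measurable M"
  unfolding det_def
  by (intro borel_measurable_sum borel_measurable_times borel_measurable_const borel_measurable_prod assms)

lemma space_PiM_UNIV_borel[simp]: "xs \<in> space (PiM UNIV (\<lambda>_. borel))"
  by (simp add: space_PiM)

locale setting =
  fixes lam :: "'g::{topological_group_add, second_countable_topology} measure"
    and act :: "'g \<Rightarrow> 'x::polish_space \<Rightarrow> 'x" and mu :: "'x measure"
    and k :: "'x \<Rightarrow> 'x \<Rightarrow> real" and rho :: real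
  assumes haar: "haar_prob lam" and action: "measurable_action act"
    and mu_prob: "prob_space mu" and mu_borel: "sets mu = sets borel"
    and mu_inv: "\<And>g. distr mu borel (act g) = mu"
    and k_meas: "(\<lambda>(x, y). k x y) \<in> borel_measurable (borel \<Otimes>\<^sub>M borel)"
    and k_pd: "pd_kernel k" and k_bdd: "bdd_above (range (\<lambda>x. k x x))"
    and rho_pos: "rho > 0"
begin

lemma lam_prob: "prob_space lam" using haar unfolding haar_prob_def by auto
lemma lam_sets[measurable_cong]: "sets lam = sets borel" using haar unfolding haar_prob_def by auto
lemmas mu_sets[measurable_cong] = mu_borel

lemma lam_right: "distr lam borel (\<lambda>h. h + g0) = lam"
  by (rule haar_right[OF haar])

lemma act_joint: "(\<lambda>(g, x). act g x) \<in> measurable (borel \<Otimes>\<^sub>M borel) (borel :: 'x measure)"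
  using action unfolding measurable_action_def by auto

lemma act_add: "act (g + h) x = act g (act h x)"
  using action unfolding measurable_action_def by auto

lemma act_meas[measurable (raw)]:
  assumes "f \<in> M \<rightarrow>\<^sub>M borel" "g \<in> M \<rightarrow>\<^sub>M borel"
  shows "(\<lambda>z. act (f z) (g z)) \<in> M \<rightarrow>\<^sub>M borel"
proof -
  have "(\<lambda>z. (f z, g z)) \<in> M \<rightarrow>\<^sub>M borel \<Otimes>\<^sub>M borel" using assms by measurable
  from measurable_compose[OF this act_joint] show ?thesis by simp
qed

lemma k_meas_raw[measurable (raw)]:
  assumes "f \<in> M \<rightarrow>\<^sub>M borel" "g \<in> M \<rightarrow>\<^sub>M borel"
  shows "(\<lambda>z. k (f z) (g z)) \<in> borel_measurable M"
proof -
  have "(\<lambda>z. (f z, g z)) \<in> M \<rightarrow>\<^sub>M borel \<Otimes>\<^sub>M borel" using assms by measurable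
  from measurable_compose[OF this k_meas] show ?thesis by simp
qed

definition "Mk = (SUP x. k x x)"

lemma k_diag_le: "k x x \<le> Mk"
  unfolding Mk_def using k_bdd by (intro cSUP_upper) auto

lemma k_abs_le: "\<bar>k x y\<bar> \<le> Mk"
  by (rule pd_abs_bound[OF k_pd k_diag_le])

lemma Mk_nonneg: "0 \<le> Mk"
  using k_abs_le[of undefined undefined] by linarith

lemma Amat_meas[measurable (raw)]:
  assumes "Xf \<in> M \<rightarrow>\<^sub>M PiM UNIV (\<lambda>_. borel)"
  shows "(\<lambda>z. Amat k rho (Xf z) $ r $ c) \<in> borel_measurable M"
proof -
  have [measurable]: "(\<lambda>z. Xf z i) \<in> M \<rightarrow>\<^sub>M borel" for i
    using measurable_compose[OF assms measurable_component_singleton, of i] by simp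
  have "(\<lambda>z. Amat k rho (Xf z) $ r $ c) = (\<lambda>z. k (Xf z r) (Xf z c) + (if r = c then rho else 0))"
    by (simp add: Amat_def mat_def)
  also have "\<dots> \<in> borel_measurable M" by measurable
  finally show ?thesis .
qed

lemma Ainv_meas[measurable (raw)]:
  assumes "Xf \<in> M \<rightarrow>\<^sub>M PiM UNIV (\<lambda>_. borel)"
  shows "(\<lambda>z. Ainv k rho (Xf z) $ i $ j) \<in> borel_measurable M"
proof -
  have e: "(\<lambda>z. Ainv k rho (Xf z) $ i $ j) = (\<lambda>z.
     det (\<chi> r c. if c = i then axis j 1 $ r else Amat k rho (Xf z) $ r $ c) / det (Amat k rho (Xf z)))"
    unfolding Ainv_def by (intro ext Ainv_cramer[OF k_pd rho_pos])
  have m1: "(\<lambda>z. det (Amat k rho (Xf z))) \<in> borel_measurable M"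
    by (rule det_meas) (rule Amat_meas[OF assms])
  have m2: "(\<lambda>z. det (\<chi> r c. if c = i then axis j 1 $ r else Amat k rho (Xf z) $ r $ c)) \<in> borel_measurable M"
  proof (rule det_meas)
    fix r c
    show "(\<lambda>z. (\<chi> r c. if c = i then axis j 1 $ r else Amat k rho (Xf z) $ r $ c) $ r $ c) \<in> borel_measurable M"
      using Amat_meas[OF assms, of r c] by (cases "c = i") simp_all
  qed
  show ?thesis unfolding e using m1 m2 by measurable
qed

lemma acoef_meas[measurable (raw)]:
  assumes "Xf \<in> M \<rightarrow>\<^sub>M PiM UNIV (\<lambda>_. borel)" "xf \<in> M \<rightarrow>\<^sub>M borel"
  shows "(\<lambda>z. acoef k rho (Xf z) j (xf z)) \<in> borel_measurable M"
proof -
  have [measurable]: "(\<lambda>z. Xf z i) \<in> M \<rightarrow>\<^sub>M borel" for i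
    using measurable_compose[OF assms(1) measurable_component_singleton, of i] by simp
  note [measurable] = Ainv_meas[OF assms(1)] assms(2)
  show ?thesis unfolding acoef_def by measurable
qed

lemma Oacoef_meas[measurable (raw)]:
  assumes "Xf \<in> M \<rightarrow>\<^sub>M PiM UNIV (\<lambda>_. borel)" "xf \<in> M \<rightarrow>\<^sub>M borel"
  shows "(\<lambda>z. orbit_avg lam act (acoef k rho (Xf z) j) (xf z)) \<in> borel_measurable M"
proof -
  interpret L: prob_space lam by (rule lam_prob)
  note [measurable] = assms
  have "(\<lambda>(z, g). acoef k rho (Xf z) j (act g (xf z))) \<in> borel_measurable (M \<Otimes>\<^sub>M lam)"
    by measurable
  then show ?thesis unfolding orbit_avg_def
    by (rule L.borel_measurable_lebesgue_integral[where f="\<lambda>z g. acoef k rho (Xf z) j (act g (xf z))"])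
qed

lemma dfun_meas[measurable (raw)]:
  assumes "Xf \<in> M \<rightarrow>\<^sub>M PiM UNIV (\<lambda>_. borel)" "xf \<in> M \<rightarrow>\<^sub>M borel"
  shows "(\<lambda>z. dfun lam act k rho (Xf z) j (xf z)) \<in> borel_measurable M"
  unfolding dfun_def using assms by measurable

lemma Dmat_meas[measurable (raw)]:
  assumes "Xf \<in> M \<rightarrow>\<^sub>M PiM UNIV (\<lambda>_. borel)"
  shows "(\<lambda>z. Dmat lam act mu k rho (Xf z) i j) \<in> borel_measurable M"
proof -
  interpret U: prob_space mu by (rule mu_prob)
  note [measurable] = assms
  have "(\<lambda>(z, x). dfun lam act k rho (Xf z) i x * dfun lam act k rho (Xf z) j x) \<in> borel_measurable (M \<Otimes>\<^sub>M mu)"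
    by measurable
  then show ?thesis unfolding Dmat_def
    by (rule U.borel_measurable_lebesgue_integral[where f="\<lambda>z x. dfun lam act k rho (Xf z) i x * dfun lam act k rho (Xf z) j x"])
qed

lemma kperp_meas[measurable (raw)]:
  assumes "f \<in> M \<rightarrow>\<^sub>M borel" "g \<in> M \<rightarrow>\<^sub>M borel"
  shows "(\<lambda>z. kperp lam act k (f z) (g z)) \<in> borel_measurable M"
proof -
  interpret L: prob_space lam by (rule lam_prob)
  note [measurable] = assms
  have "(\<lambda>(z, h). k (f z) (act h (g z))) \<in> borel_measurable (M \<Otimes>\<^sub>M lam)"
    by measurable
  then have "(\<lambda>z. \<integral>h. k (f z) (act h (g z)) \<partial>lam) \<in> borel_measurable M"
    by (rule L.borel_measurable_lebesgue_integral[where f="\<lambda>z h. k (f z) (act h (g z))"])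
  then show ?thesis unfolding kperp_def by measurable
qed

lemma Vfun_meas[measurable (raw)]:
  assumes "f \<in> M \<rightarrow>\<^sub>M borel"
  shows "(\<lambda>z. Vfun lam act mu k (f z)) \<in> borel_measurable M"
proof -
  interpret U: prob_space mu by (rule mu_prob)
  note [measurable] = assms
  have "(\<lambda>(z, x). (kperp lam act k (f z) x)\<^sup>2) \<in> borel_measurable (M \<Otimes>\<^sub>M mu)"
    by measurable
  then show ?thesis unfolding Vfun_def
    by (rule U.borel_measurable_lebesgue_integral[where f="\<lambda>z x. (kperp lam act k (f z) x)\<^sup>2"])
qed

end

context setting
begin

lemma const_PX[measurable]: "(\<lambda>z. xs) \<in> M \<rightarrow>\<^sub>M PiM UNIV (\<lambda>_. borel)"
  by (rule measurable_const) simp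

definition "Ca (n::nat) = real n * Mk / rho"

lemma Ca_nonneg: "0 \<le> Ca n" unfolding Ca_def using Mk_nonneg rho_pos by simp

lemma acoef_bound: "\<bar>acoef k rho (xs::'n::finite \<Rightarrow> 'x) j x\<bar> \<le> Ca CARD('n)"
proof -
  have "\<bar>acoef k rho xs j x\<bar> \<le> (\<Sum>i\<in>UNIV. \<bar>k (xs i) x * Ainv k rho xs $ i $ j\<bar>)"
    unfolding acoef_def by (rule sum_abs)
  also have "\<dots> \<le> (\<Sum>i\<in>(UNIV::'n set). Mk * (1 / rho))"
  proof (rule sum_mono)
    fix i
    have "\<bar>k (xs i) x * Ainv k rho xs $ i $ j\<bar> = \<bar>k (xs i) x\<bar> * \<bar>Ainv k rho xs $ i $ j\<bar>" by (rule abs_mult)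
    also have "\<dots> \<le> Mk * (1 / rho)"
      using k_abs_le Ainv_entry_bound[OF k_pd rho_pos] Mk_nonneg unfolding Ainv_def
      by (intro mult_mono) auto
    finally show "\<bar>k (xs i) x * Ainv k rho xs $ i $ j\<bar> \<le> Mk * (1 / rho)" .
  qed
  also have "\<dots> = Ca CARD('n)" unfolding Ca_def by simp
  finally show ?thesis .
qed

lemma acoef_act_integrable: "integrable lam (\<lambda>g. acoef k rho (xs::'n::finite \<Rightarrow> 'x) j (act g x))"
proof (rule integrable_bdd)
  show "finite_measure lam" using lam_prob by (simp add: prob_space_def)
  show "(\<lambda>g. acoef k rho xs j (act g x)) \<in> borel_measurable lam" by measurable
  show "\<And>g. \<bar>acoef k rho xs j (act g x)\<bar> \<le> Ca CARD('n)" by (rule acoef_bound)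
qed

lemma Oacoef_bound: "\<bar>orbit_avg lam act (acoef k rho (xs::'n::finite \<Rightarrow> 'x) j) x\<bar> \<le> Ca CARD('n)"
  unfolding orbit_avg_def by (rule prob_integral_abs_le[OF lam_prob acoef_bound])

lemma dfun_bound: "\<bar>dfun lam act k rho (xs::'n::finite \<Rightarrow> 'x) j x\<bar> \<le> 2 * Ca CARD('n)"
  unfolding dfun_def using acoef_bound[of xs j x] Oacoef_bound[of xs j x] by linarith

lemma dfun_prod_bound: "\<bar>dfun lam act k rho (xs::'n::finite \<Rightarrow> 'x) i x * dfun lam act k rho xs j x\<bar> \<le> 2 * Ca CARD('n) * (2 * Ca CARD('n))"
  unfolding abs_mult using dfun_bound Ca_nonneg by (intro mult_mono) auto

lemma Dmat_bound: "\<bar>Dmat lam act mu k rho (xs::'n::finite \<Rightarrow> 'x) i j\<bar> \<le> 2 * Ca CARD('n) * (2 * Ca CARD('n))"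
  unfolding Dmat_def by (rule prob_integral_abs_le[OF mu_prob dfun_prod_bound])

lemma dfun_integrable: "integrable mu (\<lambda>x. dfun lam act k rho (xs::'n::finite \<Rightarrow> 'x) i x * f x)"
  if "f \<in> borel_measurable mu" "\<And>x. \<bar>f x\<bar> \<le> C" for f C
proof (rule integrable_bdd)
  show "finite_measure mu" using mu_prob by (simp add: prob_space_def)
  show "(\<lambda>x. dfun lam act k rho xs i x * f x) \<in> borel_measurable mu" using that by measurable
  show "\<bar>dfun lam act k rho xs i x * f x\<bar> \<le> 2 * Ca CARD('n) * C" for x
    unfolding abs_mult using dfun_bound that(2) Ca_nonneg by (intro mult_mono) auto
qed

lemma kperp_bound: "\<bar>kperp lam act k y x\<bar> \<le> 2 * Mk"
proof -
  have "\<bar>\<integral>g. k y (act g x) \<partial>lam\<bar> \<le> Mk" by (rule prob_integral_abs_le[OF lam_prob k_abs_le])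
  then show ?thesis unfolding kperp_def using k_abs_le[of y x] by linarith
qed

lemma Vfun_nonneg: "0 \<le> Vfun lam act mu k y"
  unfolding Vfun_def by (rule integral_nonneg_AE) simp

lemma Vfun_bound: "\<bar>Vfun lam act mu k y\<bar> \<le> 2 * Mk * (2 * Mk)"
  unfolding Vfun_def
proof (rule prob_integral_abs_le[OF mu_prob])
  fix x
  have "\<bar>(kperp lam act k y x)\<^sup>2\<bar> = \<bar>kperp lam act k y x\<bar> * \<bar>kperp lam act k y x\<bar>"
    by (simp add: power2_eq_square abs_mult)
  also have "\<dots> \<le> 2 * Mk * (2 * Mk)" using kperp_bound Mk_nonneg by (intro mult_mono) auto
  finally show "\<bar>(kperp lam act k y x)\<^sup>2\<bar> \<le> 2 * Mk * (2 * Mk)" .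
qed

lemma krr_eq: "krr k rho xs Y x = (\<Sum>j\<in>UNIV. acoef k rho xs j x * Y $ j)"
proof -
  define B where "B = matrix_inv (Amat k rho xs)"
  have "krr k rho xs Y x = (\<Sum>i\<in>UNIV. k (xs i) x * (\<Sum>j\<in>UNIV. B $ i $ j * Y $ j))"
    unfolding krr_def B_def Amat_def inner_vec_def matrix_vector_mult_def by simp
  also have "\<dots> = (\<Sum>i\<in>UNIV. \<Sum>j\<in>UNIV. k (xs i) x * B $ i $ j * Y $ j)"
    by (simp only: sum_distrib_left mult.assoc)
  also have "\<dots> = (\<Sum>j\<in>UNIV. \<Sum>i\<in>UNIV. k (xs i) x * B $ i $ j * Y $ j)"
    by (rule sum.swap)
  also have "\<dots> = (\<Sum>j\<in>UNIV. (\<Sum>i\<in>UNIV. k (xs i) x * B $ i $ j) * Y $ j)"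
    by (simp only: sum_distrib_right)
  finally show ?thesis unfolding acoef_def Ainv_def B_def .
qed

lemma orbit_avg_lin:
  assumes "\<And>j. integrable lam (\<lambda>g. f j (act g x))"
  shows "orbit_avg lam act (\<lambda>y. \<Sum>j\<in>(UNIV::'n::finite set). f j y * c j) x
       = (\<Sum>j\<in>UNIV. orbit_avg lam act (f j) x * c j)"
proof -
  have "(\<integral>g. (\<Sum>j\<in>UNIV. f j (act g x) * c j) \<partial>lam) = (\<Sum>j\<in>UNIV. \<integral>g. f j (act g x) * c j \<partial>lam)"
  proof -
    have I: "\<And>j. j \<in> UNIV \<Longrightarrow> integrable lam (\<lambda>g. f j (act g x) * c j)" using assms by simp
    show ?thesis by (rule Bochner_Integration.integral_sum[where I=UNIV and f="\<lambda>j g. f j (act g x) * c j", OF I])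
  qed
  also have "\<dots> = (\<Sum>j\<in>UNIV. (\<integral>g. f j (act g x) \<partial>lam) * c j)"
    by (intro sum.cong refl Bochner_Integration.integral_mult_left assms)
  finally show ?thesis unfolding orbit_avg_def .
qed

lemma krr_minus_O:
  "krr k rho (xs::'n::finite \<Rightarrow> 'x) Y x - orbit_avg lam act (krr k rho xs Y) x
     = (\<Sum>j\<in>UNIV. dfun lam act k rho xs j x * Y $ j)"
proof -
  have e: "krr k rho xs Y = (\<lambda>y. \<Sum>j\<in>UNIV. acoef k rho xs j y * Y $ j)"
    by (rule ext) (rule krr_eq)
  have "orbit_avg lam act (krr k rho xs Y) x = orbit_avg lam act (\<lambda>y. \<Sum>j\<in>UNIV. acoef k rho xs j y * Y $ j) x"
    by (simp only: e)
  also have "\<dots> = (\<Sum>j\<in>UNIV. orbit_avg lam act (acoef k rho xs j) x * Y $ j)"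
    by (rule orbit_avg_lin) (rule acoef_act_integrable)
  finally show ?thesis
    by (simp add: krr_eq dfun_def sum_subtractf left_diff_distrib)
qed

lemma L2_sum:
  "L2_norm_sq mu (\<lambda>x. \<Sum>j\<in>UNIV. dfun lam act k rho (xs::'n::finite \<Rightarrow> 'x) j x * Y $ j)
     = (\<Sum>i\<in>UNIV. \<Sum>j\<in>UNIV. Y $ i * Y $ j * Dmat lam act mu k rho xs i j)"
proof -
  have sq: "(\<Sum>j\<in>UNIV. dfun lam act k rho xs j x * Y $ j)\<^sup>2 =
      (\<Sum>i\<in>UNIV. \<Sum>j\<in>UNIV. Y $ i * Y $ j * (dfun lam act k rho xs i x * dfun lam act k rho xs j x))" for x
    unfolding power2_eq_square sum_product by (intro sum.cong refl) (simp add: mult_ac)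
  have int: "integrable mu (\<lambda>x. dfun lam act k rho xs i x * dfun lam act k rho xs j x)" for i j
    by (rule dfun_integrable[where C="2*Ca CARD('n)"]) (measurable, rule dfun_bound)
  have I1: "integrable mu (\<lambda>x. Y $ i * Y $ j * (dfun lam act k rho xs i x * dfun lam act k rho xs j x))" for i j
    using int[of i j] by simp
  have "(\<integral>x. (\<Sum>i\<in>UNIV. \<Sum>j\<in>UNIV. Y $ i * Y $ j * (dfun lam act k rho xs i x * dfun lam act k rho xs j x)) \<partial>mu)
     = (\<Sum>i\<in>UNIV. \<integral>x. (\<Sum>j\<in>UNIV. Y $ i * Y $ j * (dfun lam act k rho xs i x * dfun lam act k rho xs j x)) \<partial>mu)"
    by (rule Bochner_Integration.integral_sum) (rule Bochner_Integration.integrable_sum, rule I1)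
  also have "\<dots> = (\<Sum>i\<in>UNIV. \<Sum>j\<in>UNIV. \<integral>x. Y $ i * Y $ j * (dfun lam act k rho xs i x * dfun lam act k rho xs j x) \<partial>mu)"
    by (intro sum.cong refl Bochner_Integration.integral_sum I1)
  also have "\<dots> = (\<Sum>i\<in>UNIV. \<Sum>j\<in>UNIV. Y $ i * Y $ j * (\<integral>x. dfun lam act k rho xs i x * dfun lam act k rho xs j x \<partial>mu))"
    by (intro sum.cong refl integral_mult_right_zero)
  finally show ?thesis unfolding L2_norm_sq_def sq Dmat_def .
qed

end

lemma integral_sq_diff:
  fixes a b :: "'a \<Rightarrow> real"
  assumes "integrable M (\<lambda>x. (a x)\<^sup>2)" "integrable M (\<lambda>x. (b x)\<^sup>2)" "integrable M (\<lambda>x. a x * b x)"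
  shows "(\<integral>x. (a x - b x)\<^sup>2 \<partial>M) = (\<integral>x. (a x)\<^sup>2 \<partial>M) - 2 * (\<integral>x. a x * b x \<partial>M) + (\<integral>x. (b x)\<^sup>2 \<partial>M)"
proof -
  have e: "(a x - b x)\<^sup>2 = ((a x)\<^sup>2 - 2 * (a x * b x)) + (b x)\<^sup>2" for x
    by (simp add: power2_diff)
  have i2: "integrable M (\<lambda>x. 2 * (a x * b x))" using assms(3) by simp
  have "(\<integral>x. (a x - b x)\<^sup>2 \<partial>M) = (\<integral>x. ((a x)\<^sup>2 - 2 * (a x * b x)) + (b x)\<^sup>2 \<partial>M)"
    by (simp only: e)
  also have "\<dots> = (\<integral>x. (a x)\<^sup>2 - 2 * (a x * b x) \<partial>M) + (\<integral>x. (b x)\<^sup>2 \<partial>M)"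
    by (rule Bochner_Integration.integral_add) (use assms i2 in auto)
  also have "(\<integral>x. (a x)\<^sup>2 - 2 * (a x * b x) \<partial>M) = (\<integral>x. (a x)\<^sup>2 \<partial>M) - (\<integral>x. 2 * (a x * b x) \<partial>M)"
    by (rule Bochner_Integration.integral_diff) (use assms i2 in auto)
  also have "(\<integral>x. 2 * (a x * b x) \<partial>M) = 2 * (\<integral>x. a x * b x \<partial>M)"
    by (rule integral_mult_right_zero)
  finally show ?thesis .
qed

context setting
begin

lemma O_meas[measurable]:
  assumes [measurable]: "h \<in> borel_measurable borel"
  shows "orbit_avg lam act h \<in> borel_measurable borel"
proof -
  interpret L: prob_space lam by (rule lam_prob)
  have "(\<lambda>(x, g). h (act g x)) \<in> borel_measurable (borel \<Otimes>\<^sub>M lam)" by measurable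
  then have "(\<lambda>x. \<integral>g. h (act g x) \<partial>lam) \<in> borel_measurable borel"
    by (rule L.borel_measurable_lebesgue_integral[where f="\<lambda>x g. h (act g x)"])
  then show ?thesis unfolding orbit_avg_def by (simp add: fun_eq_iff)
qed

lemma O_invariant:
  assumes [measurable]: "h \<in> borel_measurable borel"
  shows "orbit_avg lam act h (act g' x) = orbit_avg lam act h x"
proof -
  have "orbit_avg lam act h (act g' x) = (\<integral>g. h (act (g + g') x) \<partial>lam)"
    unfolding orbit_avg_def by (simp add: act_add)
  also have "\<dots> = (\<integral>g. h (act g x) \<partial>distr lam borel (\<lambda>g. g + g'))"
    by (rule integral_distr[symmetric]) measurable
  also have "\<dots> = orbit_avg lam act h x" unfolding orbit_avg_def lam_right ..
  finally show ?thesis .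
qed

lemma O_bound:
  assumes "\<And>x. \<bar>h x\<bar> \<le> C"
  shows "\<bar>orbit_avg lam act h x\<bar> \<le> C"
  unfolding orbit_avg_def by (rule prob_integral_abs_le[OF lam_prob]) (rule assms)

lemma inner_O:
  assumes [measurable]: "h \<in> borel_measurable borel" and hb: "\<And>x. \<bar>h x\<bar> \<le> C"
    and [measurable]: "u \<in> borel_measurable borel" and u2: "integrable mu (\<lambda>x. (u x)\<^sup>2)"
    and uinv: "\<And>g. AE x in mu. u (act g x) = u x"
  shows "(\<integral>x. orbit_avg lam act h x * u x \<partial>mu) = (\<integral>x. h x * u x \<partial>mu)"
proof -
  interpret L: prob_space lam by (rule lam_prob)
  interpret U: prob_space mu by (rule mu_prob)
  interpret pair_sigma_finite mu lam
    by (simp add: pair_sigma_finite_def prob_space_imp_sigma_finite lam_prob mu_prob)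
  have C: "0 \<le> C" using hb[of undefined] by linarith
  have u1: "integrable mu u"
    by (rule integrable_L2_L1[OF _ u2]) (auto simp: mu_prob prob_space_def)
  have ua: "integrable mu (\<lambda>x. \<bar>u x\<bar>)" using u1 by simp
  have int2: "integrable (mu \<Otimes>\<^sub>M lam) (\<lambda>(x, g). h (act g x) * u x)"
  proof (rule Fubini_integrable)
    show "(\<lambda>(x, g). h (act g x) * u x) \<in> borel_measurable (mu \<Otimes>\<^sub>M lam)" by measurable
    have e: "(\<integral>g. norm (case (x, g) of (x, g) \<Rightarrow> h (act g x) * u x) \<partial>lam)
        = (\<integral>g. \<bar>h (act g x)\<bar> \<partial>lam) * \<bar>u x\<bar>" for x
      by (simp add: abs_mult)
    have "integrable mu (\<lambda>x. (\<integral>g. \<bar>h (act g x)\<bar> \<partial>lam) * \<bar>u x\<bar>)"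
    proof (rule integrable_bdd_mult[OF ua])
      have "(\<lambda>(x, g). \<bar>h (act g x)\<bar>) \<in> borel_measurable (mu \<Otimes>\<^sub>M lam)" by measurable
      then show "(\<lambda>x. \<integral>g. \<bar>h (act g x)\<bar> \<partial>lam) \<in> borel_measurable mu"
        by (rule L.borel_measurable_lebesgue_integral[where f="\<lambda>x g. \<bar>h (act g x)\<bar>"])
      show "\<bar>\<integral>g. \<bar>h (act g x)\<bar> \<partial>lam\<bar> \<le> C" for x
        by (rule prob_integral_abs_le[OF lam_prob]) (simp add: hb)
    qed
    then show "integrable mu (\<lambda>x. \<integral>g. norm (case (x, g) of (x, g) \<Rightarrow> h (act g x) * u x) \<partial>lam)"
      by (simp only: e)
    show "AE x in mu. integrable lam (\<lambda>g. case (x, g) of (x, g) \<Rightarrow> h (act g x) * u x)"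
    proof (rule AE_I2)
      fix x
      have "integrable lam (\<lambda>g. h (act g x) * u x)"
        by (rule integrable_bdd[where C="C * \<bar>u x\<bar>"]) (auto simp: lam_prob prob_space_def abs_mult intro!: mult_right_mono hb)
      then show "integrable lam (\<lambda>g. case (x, g) of (x, g) \<Rightarrow> h (act g x) * u x)" by simp
    qed
  qed
  have inner: "(\<integral>x. h (act g x) * u x \<partial>mu) = (\<integral>x. h x * u x \<partial>mu)" for g
  proof -
    have "(\<integral>x. h (act g x) * u x \<partial>mu) = (\<integral>x. h (act g x) * u (act g x) \<partial>mu)"
      by (rule integral_cong_AE) (use uinv[of g] in \<open>auto\<close>)
    also have "\<dots> = (\<integral>x. h x * u x \<partial>distr mu borel (act g))"
      by (rule integral_distr[symmetric]) measurable
    also have "\<dots> = (\<integral>x. h x * u x \<partial>mu)" by (simp only: mu_inv)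
    finally show ?thesis .
  qed
  have "(\<integral>x. orbit_avg lam act h x * u x \<partial>mu) = (\<integral>x. (\<integral>g. h (act g x) * u x \<partial>lam) \<partial>mu)"
    unfolding orbit_avg_def by simp
  also have "\<dots> = (\<integral>g. (\<integral>x. h (act g x) * u x \<partial>mu) \<partial>lam)"
    by (rule Fubini_integral[symmetric]) (use int2 in simp)
  also have "\<dots> = (\<integral>g. (\<integral>x. h x * u x \<partial>mu) \<partial>lam)" by (simp only: inner)
  also have "\<dots> = (\<integral>x. h x * u x \<partial>mu)" by (simp add: L.prob_space)
  finally show ?thesis .
qed

end

lemma risk_formula:
  fixes Q :: "'q measure" and mu :: "'x::topological_space measure"
  assumes Q: "prob_space Q" and [measurable]: "Xt \<in> Q \<rightarrow>\<^sub>M borel" "\<xi>t \<in> borel_measurable Q"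
    and Xd: "distr Q borel Xt = mu" and \<xi>2: "integrable Q (\<lambda>q. (\<xi>t q)\<^sup>2)"
    and cm: "AE q in Q. real_cond_exp Q (vimage_algebra (space Q) Xt borel) \<xi>t q = 0"
    and v: "(\<integral>q. (\<xi>t q)\<^sup>2 \<partial>Q) = \<sigma>\<^sup>2"
    and [measurable]: "h \<in> borel_measurable borel" "fs \<in> borel_measurable borel"
    and u2: "integrable mu (\<lambda>x. (h x - fs x)\<^sup>2)"
  shows "risk Q Xt \<xi>t fs h = L2_norm_sq mu (\<lambda>x. h x - fs x) + \<sigma>\<^sup>2"
proof -
  define u where "u x = h x - fs x" for x
  have [measurable]: "u \<in> borel_measurable borel" unfolding u_def by measurable
  have e: "(h (Xt q) - (fs (Xt q) + \<xi>t q))\<^sup>2 = (u (Xt q) - \<xi>t q)\<^sup>2" for q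
    unfolding u_def by (simp add: algebra_simps)
  have uX2: "integrable Q (\<lambda>q. (u (Xt q))\<^sup>2)"
    using integrable_distr_eq[of Xt Q borel "\<lambda>x. (u x)\<^sup>2"] u2 unfolding Xd u_def by simp
  have uX2i: "(\<integral>q. (u (Xt q))\<^sup>2 \<partial>Q) = L2_norm_sq mu (\<lambda>x. h x - fs x)"
    unfolding L2_norm_sq_def Xd[symmetric] u_def
    by (rule integral_distr[symmetric]) measurable
  have prodi: "integrable Q (\<lambda>q. u (Xt q) * \<xi>t q)"
    by (rule integrable_L2_prod[OF uX2 \<xi>2]) measurable
  define G where "G = vimage_algebra (space Q) Xt borel"
  have sub: "subalgebra Q G"
    unfolding subalgebra_def G_def
    using measurable_iff_sets[of Xt Q borel] \<open>Xt \<in> Q \<rightarrow>\<^sub>M borel\<close> by simp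
  interpret sigma_finite_subalgebra Q G
    by (rule finite_measure_subalgebra_is_sigma_finite)
      (use Q sub in \<open>simp add: finite_measure_subalgebra_def finite_measure_subalgebra_axioms_def prob_space_def\<close>)
  have XG: "Xt \<in> G \<rightarrow>\<^sub>M borel" unfolding G_def by (rule measurable_vimage_algebra1) simp
  have uG: "(\<lambda>q. u (Xt q)) \<in> borel_measurable G" using XG by measurable
  have "(\<integral>q. u (Xt q) * \<xi>t q \<partial>Q) = (\<integral>q. u (Xt q) * real_cond_exp Q G \<xi>t q \<partial>Q)"
    by (rule real_cond_exp_intg(2)[symmetric, OF prodi uG]) measurable
  also have "\<dots> = (\<integral>q. 0 \<partial>Q)"
    by (rule integral_cong_AE) (use cm in \<open>auto simp: G_def\<close>)
  finally have z: "(\<integral>q. u (Xt q) * \<xi>t q \<partial>Q) = 0" by simp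
  have "risk Q Xt \<xi>t fs h = (\<integral>q. (u (Xt q) - \<xi>t q)\<^sup>2 \<partial>Q)"
    unfolding risk_def e ..
  also have "\<dots> = (\<integral>q. (u (Xt q))\<^sup>2 \<partial>Q) - 2 * (\<integral>q. u (Xt q) * \<xi>t q \<partial>Q) + (\<integral>q. (\<xi>t q)\<^sup>2 \<partial>Q)"
    by (rule integral_sq_diff[OF uX2 \<xi>2 prodi])
  finally show ?thesis using uX2i z v by simp
qed

context setting
begin

lemma orth:
  assumes [measurable]: "h \<in> borel_measurable borel" and hb: "\<And>x. \<bar>h x\<bar> \<le> C"
    and [measurable]: "fs \<in> borel_measurable borel" and f2: "integrable mu (\<lambda>x. (fs x)\<^sup>2)"
    and finv: "\<And>g. AE x in mu. fs (act g x) = fs x"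
  shows "L2_norm_sq mu (\<lambda>x. h x - fs x) =
     L2_norm_sq mu (\<lambda>x. orbit_avg lam act h x - fs x) + L2_norm_sq mu (\<lambda>x. h x - orbit_avg lam act h x)"
proof -
  define oh where "oh = orbit_avg lam act h"
  have [measurable]: "oh \<in> borel_measurable borel" unfolding oh_def by measurable
  have ob: "\<bar>oh x\<bar> \<le> C" for x unfolding oh_def by (rule O_bound[OF hb])
  have fm: "finite_measure mu" using mu_prob by (simp add: prob_space_def)
  have f1: "integrable mu fs" by (rule integrable_L2_L1[OF fm f2]) measurable
  have C: "0 \<le> C" using hb[of undefined] by linarith
  have sqb: "\<bar>(a x)\<^sup>2\<bar> \<le> C * C" if "\<And>x. \<bar>a x\<bar> \<le> C" for a :: "'x \<Rightarrow> real" and x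
    unfolding power2_eq_square abs_mult using that C by (intro mult_mono) auto
  have prb: "\<bar>a x * b x\<bar> \<le> C * C" if "\<And>x. \<bar>a x\<bar> \<le> C" "\<And>x. \<bar>b x\<bar> \<le> C" for a b :: "'x \<Rightarrow> real" and x
    unfolding abs_mult using that C by (intro mult_mono) auto
  have h2: "integrable mu (\<lambda>x. (h x)\<^sup>2)" by (rule integrable_bdd[OF fm _ sqb[OF hb]]) measurable
  have o2: "integrable mu (\<lambda>x. (oh x)\<^sup>2)" by (rule integrable_bdd[OF fm _ sqb[OF ob]]) measurable
  have ho: "integrable mu (\<lambda>x. h x * oh x)" by (rule integrable_bdd[OF fm _ prb[OF hb ob]]) measurable
  have hf: "integrable mu (\<lambda>x. h x * fs x)" by (rule integrable_bdd_mult[OF f1 _ hb]) measurable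
  have ofi: "integrable mu (\<lambda>x. oh x * fs x)" by (rule integrable_bdd_mult[OF f1 _ ob]) measurable
  have oinv: "AE x in mu. oh (act g x) = oh x" for g
    unfolding oh_def by (intro AE_I2 O_invariant) measurable
  have r1: "(\<integral>x. oh x * oh x \<partial>mu) = (\<integral>x. h x * oh x \<partial>mu)"
    unfolding oh_def by (rule inner_O[OF _ hb _ o2[unfolded oh_def] oinv[unfolded oh_def]]) measurable
  have r2: "(\<integral>x. oh x * fs x \<partial>mu) = (\<integral>x. h x * fs x \<partial>mu)"
    unfolding oh_def by (rule inner_O[OF _ hb _ f2 finv]) measurable
  have o2e: "(\<integral>x. (oh x)\<^sup>2 \<partial>mu) = (\<integral>x. oh x * oh x \<partial>mu)" by (simp add: power2_eq_square)
  have i1: "(\<integral>x. (h x - fs x)\<^sup>2 \<partial>mu) = (\<integral>x. (h x)\<^sup>2 \<partial>mu) - 2 * (\<integral>x. h x * fs x \<partial>mu) + (\<integral>x. (fs x)\<^sup>2 \<partial>mu)"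
    by (rule integral_sq_diff[OF h2 f2 hf])
  have i2: "(\<integral>x. (oh x - fs x)\<^sup>2 \<partial>mu) = (\<integral>x. (oh x)\<^sup>2 \<partial>mu) - 2 * (\<integral>x. oh x * fs x \<partial>mu) + (\<integral>x. (fs x)\<^sup>2 \<partial>mu)"
    by (rule integral_sq_diff[OF o2 f2 ofi])
  have i3: "(\<integral>x. (h x - oh x)\<^sup>2 \<partial>mu) = (\<integral>x. (h x)\<^sup>2 \<partial>mu) - 2 * (\<integral>x. h x * oh x \<partial>mu) + (\<integral>x. (oh x)\<^sup>2 \<partial>mu)"
    by (rule integral_sq_diff[OF h2 o2 ho])
  show ?thesis unfolding L2_norm_sq_def oh_def[symmetric] i1 i2 i3 o2e r1 r2 by simp
qed

end

lemma weighted_CS: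
  fixes w c :: "'a \<Rightarrow> real"
  shows "(\<Sum>j\<in>I. w j * c j)\<^sup>2 \<le> (\<Sum>j\<in>I. \<bar>w j\<bar>) * (\<Sum>j\<in>I. \<bar>w j\<bar> * (c j)\<^sup>2)"
proof -
  define a where "a j = sqrt \<bar>w j\<bar>" for j
  define b where "b j = sgn (w j) * sqrt \<bar>w j\<bar> * c j" for j
  have ab: "a j * b j = w j * c j" for j
  proof -
    have "a j * b j = sgn (w j) * (sqrt \<bar>w j\<bar> * sqrt \<bar>w j\<bar>) * c j" unfolding a_def b_def by (simp add: mult_ac)
    also have "\<dots> = sgn (w j) * \<bar>w j\<bar> * c j" by simp
    also have "\<dots> = w j * c j" by (simp add: sgn_mult_abs)
    finally show ?thesis .
  qed
  have a2: "(a j)\<^sup>2 = \<bar>w j\<bar>" for j unfolding a_def by simp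
  have b2: "(b j)\<^sup>2 = \<bar>w j\<bar> * (c j)\<^sup>2" for j
  proof -
    have "(b j)\<^sup>2 = (sgn (w j))\<^sup>2 * (sqrt \<bar>w j\<bar>)\<^sup>2 * (c j)\<^sup>2" unfolding b_def by (simp add: power_mult_distrib)
    also have "\<dots> = \<bar>w j\<bar> * (c j)\<^sup>2"
      by (cases "w j = 0") (auto simp: sgn_if)
    finally show ?thesis .
  qed
  show ?thesis using Cauchy_Schwarz_ineq_sum[of a b I] unfolding ab a2 b2 .
qed

context setting
begin

lemma acoef_comb:
  "(\<Sum>j\<in>UNIV. acoef k rho (xs::'n::finite \<Rightarrow> 'x) j y * Amat k rho xs $ j $ l) = k (xs l) y"
proof -
  define A where "A = Amat k rho xs"
  define B where "B = matrix_inv A"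
  have BA: "B ** A = mat 1" unfolding A_def B_def by (rule matrix_inv_props(2)[OF Amat_invertible[OF k_pd rho_pos]])
  have "(\<Sum>j\<in>UNIV. acoef k rho xs j y * A $ j $ l) = (\<Sum>j\<in>UNIV. (\<Sum>i\<in>UNIV. k (xs i) y * B $ i $ j) * A $ j $ l)"
    unfolding acoef_def Ainv_def A_def B_def ..
  also have "\<dots> = (\<Sum>j\<in>UNIV. \<Sum>i\<in>UNIV. k (xs i) y * B $ i $ j * A $ j $ l)"
    by (simp only: sum_distrib_right)
  also have "\<dots> = (\<Sum>i\<in>UNIV. \<Sum>j\<in>UNIV. k (xs i) y * B $ i $ j * A $ j $ l)"
    by (rule sum.swap)
  also have "\<dots> = (\<Sum>i\<in>UNIV. k (xs i) y * (\<Sum>j\<in>UNIV. B $ i $ j * A $ j $ l))"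
    by (simp only: sum_distrib_left mult.assoc)
  also have "\<dots> = (\<Sum>i\<in>UNIV. k (xs i) y * (B ** A) $ i $ l)"
    by (simp only: matrix_matrix_mult_def vec_lambda_beta)
  also have "\<dots> = (\<Sum>i\<in>UNIV. k (xs i) y * (if i = l then 1 else 0))"
    by (simp only: BA mat_def vec_lambda_beta)
  also have "\<dots> = k (xs l) y" by (simp add: if_distrib cong: if_cong)
  finally show ?thesis unfolding A_def .
qed

lemma v_identity:
  "(\<Sum>j\<in>UNIV. Amat k rho (xs::'n::finite \<Rightarrow> 'x) $ j $ l * dfun lam act k rho xs j x) = kperp lam act k (xs l) x"
proof -
  have e1: "(\<Sum>j\<in>UNIV. Amat k rho xs $ j $ l * acoef k rho xs j x) = k (xs l) x"
    using acoef_comb[of xs x l] by (simp add: mult.commute)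
  have "(\<Sum>j\<in>UNIV. orbit_avg lam act (acoef k rho xs j) x * Amat k rho xs $ j $ l)
      = orbit_avg lam act (\<lambda>y. \<Sum>j\<in>UNIV. acoef k rho xs j y * Amat k rho xs $ j $ l) x"
    by (rule orbit_avg_lin[symmetric]) (rule acoef_act_integrable)
  also have "\<dots> = orbit_avg lam act (\<lambda>y. k (xs l) y) x" by (simp only: acoef_comb)
  finally have e2: "(\<Sum>j\<in>UNIV. Amat k rho xs $ j $ l * orbit_avg lam act (acoef k rho xs j) x)
      = (\<integral>g. k (xs l) (act g x) \<partial>lam)"
    unfolding orbit_avg_def by (simp add: mult.commute)
  show ?thesis
    unfolding dfun_def kperp_def right_diff_distrib sum_subtractf e1 e2 ..
qed

lemma Amat_abs: "\<bar>Amat k rho (xs::'n::finite \<Rightarrow> 'x) $ j $ l\<bar> \<le> Mk + (if j = l then rho else 0)"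
proof -
  have "Amat k rho xs $ j $ l = k (xs j) (xs l) + (if j = l then rho else 0)"
    by (simp add: Amat_def mat_def)
  then show ?thesis using k_abs_le[of "xs j" "xs l"] rho_pos by (auto simp: abs_le_iff)
qed

lemma Amat_colsum: "(\<Sum>j\<in>UNIV. \<bar>Amat k rho (xs::'n::finite \<Rightarrow> 'x) $ j $ l\<bar>) \<le> real CARD('n) * Mk + rho"
proof -
  have "(\<Sum>j\<in>UNIV. \<bar>Amat k rho xs $ j $ l\<bar>) \<le> (\<Sum>j\<in>(UNIV::'n set). Mk + (if j = l then rho else 0))"
    by (rule sum_mono) (rule Amat_abs)
  also have "\<dots> = real CARD('n) * Mk + rho" by (simp add: sum.distrib)
  finally show ?thesis .
qed

lemma Amat_rowsum: "(\<Sum>l\<in>UNIV. \<bar>Amat k rho (xs::'n::finite \<Rightarrow> 'x) $ j $ l\<bar>) \<le> real CARD('n) * Mk + rho"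
proof -
  have "(\<Sum>l\<in>UNIV. \<bar>Amat k rho xs $ j $ l\<bar>) \<le> (\<Sum>l\<in>(UNIV::'n set). Mk + (if j = l then rho else 0))"
    by (rule sum_mono) (rule Amat_abs)
  also have "\<dots> = real CARD('n) * Mk + rho" by (simp add: sum.distrib)
  finally show ?thesis .
qed

lemma Dmat_diag_nonneg: "0 \<le> Dmat lam act mu k rho xs j j"
  unfolding Dmat_def by (rule integral_nonneg_AE) simp

lemma trace_ineq:
  "(\<Sum>l\<in>UNIV. Vfun lam act mu k (xs l)) \<le>
     (real CARD('n) * Mk + rho)\<^sup>2 * (\<Sum>j\<in>UNIV. Dmat lam act mu k rho (xs::'n::finite \<Rightarrow> 'x) j j)"
proof -
  define R where "R = real CARD('n) * Mk + rho"
  have R: "0 \<le> R" unfolding R_def using Mk_nonneg rho_pos by simp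
  have fm: "finite_measure mu" using mu_prob by (simp add: prob_space_def)
  have dsq: "integrable mu (\<lambda>x. (dfun lam act k rho xs j x)\<^sup>2)" for j
    using dfun_integrable[of "dfun lam act k rho xs j" "2 * Ca CARD('n)" xs j]
    by (simp add: power2_eq_square dfun_bound)
  have step: "Vfun lam act mu k (xs l) \<le> R * (\<Sum>j\<in>UNIV. \<bar>Amat k rho xs $ j $ l\<bar> * Dmat lam act mu k rho xs j j)" for l
  proof -
    have pw: "(kperp lam act k (xs l) x)\<^sup>2 \<le> R * (\<Sum>j\<in>UNIV. \<bar>Amat k rho xs $ j $ l\<bar> * (dfun lam act k rho xs j x)\<^sup>2)" for x
    proof -
      have "(kperp lam act k (xs l) x)\<^sup>2 = (\<Sum>j\<in>UNIV. Amat k rho xs $ j $ l * dfun lam act k rho xs j x)\<^sup>2"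
        by (simp only: v_identity)
      also have "\<dots> \<le> (\<Sum>j\<in>UNIV. \<bar>Amat k rho xs $ j $ l\<bar>) * (\<Sum>j\<in>UNIV. \<bar>Amat k rho xs $ j $ l\<bar> * (dfun lam act k rho xs j x)\<^sup>2)"
        by (rule weighted_CS)
      also have "\<dots> \<le> R * (\<Sum>j\<in>UNIV. \<bar>Amat k rho xs $ j $ l\<bar> * (dfun lam act k rho xs j x)\<^sup>2)"
        by (rule mult_right_mono) (use Amat_colsum[of xs l] in \<open>auto simp: R_def intro: sum_nonneg\<close>)
      finally show ?thesis .
    qed
    have i1: "integrable mu (\<lambda>x. (kperp lam act k (xs l) x)\<^sup>2)"
    proof (rule integrable_bdd[OF fm])
      show "(\<lambda>x. (kperp lam act k (xs l) x)\<^sup>2) \<in> borel_measurable mu" by measurable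
      show "\<bar>(kperp lam act k (xs l) x)\<^sup>2\<bar> \<le> 2 * Mk * (2 * Mk)" for x
        unfolding power2_eq_square abs_mult using kperp_bound Mk_nonneg by (intro mult_mono) auto
    qed
    have i2: "integrable mu (\<lambda>x. R * (\<Sum>j\<in>UNIV. \<bar>Amat k rho xs $ j $ l\<bar> * (dfun lam act k rho xs j x)\<^sup>2))"
      using dsq by simp
    have "Vfun lam act mu k (xs l) \<le> (\<integral>x. R * (\<Sum>j\<in>UNIV. \<bar>Amat k rho xs $ j $ l\<bar> * (dfun lam act k rho xs j x)\<^sup>2) \<partial>mu)"
      unfolding Vfun_def by (rule integral_mono[OF i1 i2 pw])
    also have "\<dots> = R * (\<Sum>j\<in>UNIV. \<bar>Amat k rho xs $ j $ l\<bar> * (\<integral>x. (dfun lam act k rho xs j x)\<^sup>2 \<partial>mu))"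
      using dsq by (simp add: Bochner_Integration.integral_sum)
    also have "\<dots> = R * (\<Sum>j\<in>UNIV. \<bar>Amat k rho xs $ j $ l\<bar> * Dmat lam act mu k rho xs j j)"
      unfolding Dmat_def by (simp add: power2_eq_square)
    finally show ?thesis .
  qed
  have "(\<Sum>l\<in>UNIV. Vfun lam act mu k (xs l)) \<le> (\<Sum>l\<in>UNIV. R * (\<Sum>j\<in>UNIV. \<bar>Amat k rho xs $ j $ l\<bar> * Dmat lam act mu k rho xs j j))"
    by (rule sum_mono) (rule step)
  also have "\<dots> = R * (\<Sum>l\<in>UNIV. \<Sum>j\<in>UNIV. \<bar>Amat k rho xs $ j $ l\<bar> * Dmat lam act mu k rho xs j j)"
    by (simp only: sum_distrib_left)
  also have "\<dots> = R * (\<Sum>j\<in>UNIV. \<Sum>l\<in>UNIV. \<bar>Amat k rho xs $ j $ l\<bar> * Dmat lam act mu k rho xs j j)"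
    by (subst sum.swap) (rule refl)
  also have "\<dots> = R * (\<Sum>j\<in>UNIV. Dmat lam act mu k rho xs j j * (\<Sum>l\<in>UNIV. \<bar>Amat k rho xs $ j $ l\<bar>))"
    by (intro arg_cong[where f="\<lambda>z. R * z"] sum.cong refl) (simp add: sum_distrib_left mult.commute)
  also have "\<dots> \<le> R * (\<Sum>j\<in>UNIV. Dmat lam act mu k rho xs j j * R)"
    by (intro mult_left_mono sum_mono R mult_left_mono Dmat_diag_nonneg) (simp add: R_def Amat_rowsum)
  also have "\<dots> = R\<^sup>2 * (\<Sum>j\<in>UNIV. Dmat lam act mu k rho xs j j)"
    by (simp add: power2_eq_square sum_distrib_left mult_ac)
  finally show ?thesis unfolding R_def .
qed

end

lemma integrable_sq_diff_bdd:
  fixes h f :: "'a \<Rightarrow> real"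
  assumes fm: "finite_measure M" and [measurable]: "h \<in> borel_measurable M" "f \<in> borel_measurable M"
    and hb: "\<And>x. \<bar>h x\<bar> \<le> C" and f2: "integrable M (\<lambda>x. (f x)\<^sup>2)"
  shows "integrable M (\<lambda>x. (h x - f x)\<^sup>2)"
proof -
  have C: "0 \<le> C" using hb[of undefined] by linarith
  have h2: "integrable M (\<lambda>x. (h x)\<^sup>2)"
    by (rule integrable_bdd[OF fm, where C="C*C"]) (measurable, unfold power2_eq_square abs_mult, use hb C in \<open>intro mult_mono; auto\<close>)
  have hf: "integrable M (\<lambda>x. h x * f x)"
    by (rule integrable_L2_prod[OF h2 f2]) measurable
  have e: "(h x - f x)\<^sup>2 = ((h x)\<^sup>2 - 2 * (h x * f x)) + (f x)\<^sup>2" for x by (simp add: power2_diff)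
  show ?thesis unfolding e using h2 hf f2 by simp
qed

context setting
begin

lemma krr_meas[measurable]: "krr k rho (xs::'n::finite \<Rightarrow> 'x) Y \<in> borel_measurable borel"
proof -
  have e: "krr k rho xs Y = (\<lambda>x. \<Sum>j\<in>UNIV. acoef k rho xs j x * Y $ j)" by (rule ext) (rule krr_eq)
  show ?thesis unfolding e by measurable
qed

lemma krr_bound: "\<bar>krr k rho (xs::'n::finite \<Rightarrow> 'x) Y x\<bar> \<le> (\<Sum>j\<in>UNIV. Ca CARD('n) * \<bar>Y $ j\<bar>)"
proof -
  have "\<bar>krr k rho xs Y x\<bar> \<le> (\<Sum>j\<in>UNIV. \<bar>acoef k rho xs j x * Y $ j\<bar>)" unfolding krr_eq by (rule sum_abs)
  also have "\<dots> \<le> (\<Sum>j\<in>UNIV. Ca CARD('n) * \<bar>Y $ j\<bar>)"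
    by (intro sum_mono) (simp add: abs_mult acoef_bound mult_right_mono)
  finally show ?thesis .
qed

lemma S_eq: "L2_norm_sq mu (\<lambda>x. krr k rho (xs::'n::finite \<Rightarrow> 'x) Y x - orbit_avg lam act (krr k rho xs Y) x)
   = (\<Sum>i\<in>UNIV. \<Sum>j\<in>UNIV. Y $ i * Y $ j * Dmat lam act mu k rho xs i j)"
  unfolding krr_minus_O by (rule L2_sum)

lemma risk_diff:
  fixes Q :: "'q measure"
  assumes Q: "prob_space Q" and [measurable]: "Xt \<in> Q \<rightarrow>\<^sub>M borel" "\<xi>t \<in> borel_measurable Q"
    and Xd: "distr Q borel Xt = mu" and \<xi>2: "integrable Q (\<lambda>q. (\<xi>t q)\<^sup>2)"
    and cm: "AE q in Q. real_cond_exp Q (vimage_algebra (space Q) Xt borel) \<xi>t q = 0"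
    and v: "(\<integral>q. (\<xi>t q)\<^sup>2 \<partial>Q) = \<sigma>\<^sup>2"
    and [measurable]: "fs \<in> borel_measurable borel" and f2: "integrable mu (\<lambda>x. (fs x)\<^sup>2)"
    and finv: "\<And>g. AE x in mu. fs (act g x) = fs x"
  shows "risk Q Xt \<xi>t fs (krr k rho (xs::'n::finite \<Rightarrow> 'x) Y) - risk Q Xt \<xi>t fs (orbit_avg lam act (krr k rho xs Y))
     = (\<Sum>i\<in>UNIV. \<Sum>j\<in>UNIV. Y $ i * Y $ j * Dmat lam act mu k rho xs i j)"
proof -
  define h where "h = krr k rho xs Y"
  define C where "C = (\<Sum>j\<in>UNIV. Ca CARD('n) * \<bar>Y $ j\<bar>)"
  have [measurable]: "h \<in> borel_measurable borel" unfolding h_def by measurable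
  have hb: "\<bar>h x\<bar> \<le> C" for x unfolding h_def C_def by (rule krr_bound)
  have [measurable]: "orbit_avg lam act h \<in> borel_measurable borel" by measurable
  have ob: "\<bar>orbit_avg lam act h x\<bar> \<le> C" for x by (rule O_bound[OF hb])
  have fm: "finite_measure mu" using mu_prob by (simp add: prob_space_def)
  have fmu: "fs \<in> borel_measurable mu" by measurable
  have r1: "risk Q Xt \<xi>t fs h = L2_norm_sq mu (\<lambda>x. h x - fs x) + \<sigma>\<^sup>2"
    by (rule risk_formula[OF Q _ _ Xd \<xi>2 cm v]) (measurable, rule integrable_sq_diff_bdd[OF fm _ fmu hb f2], measurable)
  have r2: "risk Q Xt \<xi>t fs (orbit_avg lam act h) = L2_norm_sq mu (\<lambda>x. orbit_avg lam act h x - fs x) + \<sigma>\<^sup>2"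
    by (rule risk_formula[OF Q _ _ Xd \<xi>2 cm v]) (measurable, rule integrable_sq_diff_bdd[OF fm _ fmu ob f2], measurable)
  have "risk Q Xt \<xi>t fs h - risk Q Xt \<xi>t fs (orbit_avg lam act h) = L2_norm_sq mu (\<lambda>x. h x - orbit_avg lam act h x)"
  proof -
    have o: "L2_norm_sq mu (\<lambda>x. h x - fs x) =
       L2_norm_sq mu (\<lambda>x. orbit_avg lam act h x - fs x) + L2_norm_sq mu (\<lambda>x. h x - orbit_avg lam act h x)"
      by (rule orth[OF _ hb _ f2 finv]) measurable
    show ?thesis unfolding r1 r2 using o by simp
  qed
  then show ?thesis unfolding h_def S_eq .
qed

end

theorem theorem5p2:
  fixes lam :: "'g::{topological_group_add, t2_space, second_countable_topology} measure"
    and act :: "'g \<Rightarrow> 'x::polish_space \<Rightarrow> 'x"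
    and \<mu> :: "'x measure"
    and k :: "'x \<Rightarrow> 'x \<Rightarrow> real"
    and fstar :: "'x \<Rightarrow> real"
    and P :: "'w measure" and X :: "'n::finite \<Rightarrow> 'w \<Rightarrow> 'x" and \<xi> :: "'n \<Rightarrow> 'w \<Rightarrow> real"
    and Q :: "'q measure" and Xt :: "'q \<Rightarrow> 'x" and \<xi>t :: "'q \<Rightarrow> real"
    and \<sigma> \<rho> :: real
    and f' :: "'w \<Rightarrow> 'x \<Rightarrow> real"
  assumes G_compact: "compact (UNIV :: 'g set)"
    and haar: "haar_prob lam"
    and action: "measurable_action act"
    and mu_prob: "prob_space \<mu>" and mu_borel: "sets \<mu> = sets borel"
    and mu_inv: "\<And>g. distr \<mu> borel (act g) = \<mu>"
    and mu_supp: "measure_support \<mu> = UNIV"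
    and k_meas: "(\<lambda>(x, y). k x y) \<in> borel_measurable (borel \<Otimes>\<^sub>M borel)"
    and k_pd: "pd_kernel k"
    and k_cont: "\<And>x. continuous_on UNIV (\<lambda>y. k y x)"
    and k_bdd: "bdd_above (range (\<lambda>x. k x x))"
    and fstar_meas: "fstar \<in> borel_measurable borel"
    and fstar_L2: "integrable \<mu> (\<lambda>x. (fstar x)\<^sup>2)"
    and fstar_inv: "\<And>g. AE x in \<mu>. fstar (act g x) = fstar x"
    (* training sample *)
    and P_prob: "prob_space P"
    and X_meas: "\<And>i. X i \<in> measurable P borel"
    and \<xi>_meas: "\<And>i. \<xi> i \<in> borel_measurable P"
    and sample_indep: "prob_space.indep_vars P (\<lambda>_. borel \<Otimes>\<^sub>M borel)
                         (\<lambda>i \<omega>. (X i \<omega>, fstar (X i \<omega>) + \<xi> i \<omega>)) UNIV"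
    and sample_ident: "\<And>i j. distr P (borel \<Otimes>\<^sub>M borel) (\<lambda>\<omega>. (X i \<omega>, fstar (X i \<omega>) + \<xi> i \<omega>))
                           = distr P (borel \<Otimes>\<^sub>M borel) (\<lambda>\<omega>. (X j \<omega>, fstar (X j \<omega>) + \<xi> j \<omega>))"
    and X_distr: "\<And>i. distr P borel (X i) = \<mu>"
    and \<xi>_L2: "\<And>i. integrable P (\<lambda>\<omega>. (\<xi> i \<omega>)\<^sup>2)"
    and noise_mean: "\<And>i. AE \<omega> in P. real_cond_exp P
                 (vimage_algebra (space P) (\<lambda>\<omega>. \<lambda>i\<in>UNIV. X i \<omega>) (PiM UNIV (\<lambda>_. borel))) (\<xi> i) \<omega> = 0"
    and noise_cov: "\<And>i j. AE \<omega> in P. real_cond_exp P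
                 (vimage_algebra (space P) (\<lambda>\<omega>. \<lambda>i\<in>UNIV. X i \<omega>) (PiM UNIV (\<lambda>_. borel)))
                 (\<lambda>\<omega>. \<xi> i \<omega> * \<xi> j \<omega>) \<omega> = (if i = j then \<sigma>\<^sup>2 else 0)"
    (* test point *)
    and Q_prob: "prob_space Q"
    and Xt_meas: "Xt \<in> measurable Q borel"
    and \<xi>t_meas: "\<xi>t \<in> borel_measurable Q"
    and Xt_distr: "distr Q borel Xt = \<mu>"
    and \<xi>t_L2: "integrable Q (\<lambda>q. (\<xi>t q)\<^sup>2)"
    and test_noise_mean: "AE q in Q. real_cond_exp Q (vimage_algebra (space Q) Xt borel) \<xi>t q = 0"
    and test_noise_var: "(\<integral>q. (\<xi>t q)\<^sup>2 \<partial>Q) = \<sigma>\<^sup>2"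
    (* regularisation and competitor *)
    and \<rho>_pos: "\<rho> > 0"
    and f'_meas: "\<And>\<omega>. \<omega> \<in> space P \<Longrightarrow> f' \<omega> \<in> borel_measurable borel"
    and f'_L2: "\<And>\<omega>. \<omega> \<in> space P \<Longrightarrow> integrable \<mu> (\<lambda>x. (f' \<omega> x)\<^sup>2)"
    and f'_better: "\<And>\<omega>. \<omega> \<in> space P \<Longrightarrow>
         risk Q Xt \<xi>t fstar (f' \<omega>)
           \<le> risk Q Xt \<xi>t fstar
                (orbit_avg lam act (krr k \<rho> (\<lambda>i. X i \<omega>) (\<chi> i. fstar (X i \<omega>) + \<xi> i \<omega>)))"
  shows "(\<integral>\<^sup>+ \<omega>. ennreal (risk Q Xt \<xi>t fstar (krr k \<rho> (\<lambda>i. X i \<omega>) (\<chi> i. fstar (X i \<omega>) + \<xi> i \<omega>))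
                        - risk Q Xt \<xi>t fstar (f' \<omega>)) \<partial>P)
         \<ge> (\<integral>\<^sup>+ \<omega>. ennreal (L2_norm_sq \<mu>
                 (\<lambda>x. krr k \<rho> (\<lambda>i. X i \<omega>) (\<chi> i. fstar (X i \<omega>)) x
                      - orbit_avg lam act (krr k \<rho> (\<lambda>i. X i \<omega>) (\<chi> i. fstar (X i \<omega>))) x)) \<partial>P)
           + ennreal (\<sigma>\<^sup>2 * L2_norm_sq2 \<mu> (kperp lam act k)
                 / (sqrt (real CARD('n)) * (SUP x. k x x) + \<rho> / sqrt (real CARD('n)))\<^sup>2)"
proof -
  interpret S: setting lam act \<mu> k \<rho>
    by (rule setting.intro[OF haar action mu_prob mu_borel mu_inv k_meas k_pd k_bdd \<rho>_pos])
  interpret P: prob_space P by (rule P_prob)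
  note [measurable] = X_meas \<xi>_meas fstar_meas
  define Xv where "Xv \<omega> = (\<lambda>i. X i \<omega>)" for \<omega>
  define G where "G = vimage_algebra (space P) (\<lambda>\<omega>. \<lambda>i\<in>UNIV. X i \<omega>) (PiM UNIV (\<lambda>_. borel))"
  have restr: "(\<lambda>\<omega>. \<lambda>i\<in>UNIV. X i \<omega>) = Xv" unfolding Xv_def by (simp add: restrict_UNIV)
  have XvP[measurable]: "Xv \<in> P \<rightarrow>\<^sub>M PiM UNIV (\<lambda>_. borel :: 'x measure)"
    unfolding restr[symmetric] by (rule measurable_restrict) (rule X_meas)
  have XvG: "Xv \<in> G \<rightarrow>\<^sub>M PiM UNIV (\<lambda>_. borel :: 'x measure)"
    unfolding G_def restr by (rule measurable_vimage_algebra1) simp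
  have XiG[measurable]: "(\<lambda>\<omega>. X i \<omega>) \<in> G \<rightarrow>\<^sub>M borel" for i
    using measurable_compose[OF XvG measurable_component_singleton, of i] unfolding Xv_def by simp
  have sub: "subalgebra P G"
    unfolding subalgebra_def G_def restr
    using measurable_iff_sets[of Xv P "PiM UNIV (\<lambda>_. borel :: 'x measure)"] XvP by simp
  interpret C: sigma_finite_subalgebra P G
    by (rule finite_measure_subalgebra_is_sigma_finite)
      (use P_prob sub in \<open>simp add: finite_measure_subalgebra_def finite_measure_subalgebra_axioms_def prob_space_def\<close>)
  have nm: "AE \<omega> in P. real_cond_exp P G (\<xi> i) \<omega> = 0" for i using noise_mean[of i] unfolding G_def .
  have nc: "AE \<omega> in P. real_cond_exp P G (\<lambda>\<omega>. \<xi> i \<omega> * \<xi> j \<omega>) \<omega> = (if i = j then \<sigma>\<^sup>2 else 0)" for i j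
    using noise_cov[of i j] unfolding G_def .
  define D where "D \<omega> i j = Dmat lam act \<mu> k \<rho> (Xv \<omega>) i j" for \<omega> i j
  define CD where "CD = 2 * S.Ca CARD('n) * (2 * S.Ca CARD('n))"
  have DP[measurable]: "(\<lambda>\<omega>. D \<omega> i j) \<in> borel_measurable P" for i j unfolding D_def by measurable
  have DG: "(\<lambda>\<omega>. D \<omega> i j) \<in> borel_measurable G" for i j
    unfolding D_def using XvG by measurable
  have Db: "\<bar>D \<omega> i j\<bar> \<le> CD" for \<omega> i j unfolding D_def CD_def by (rule S.Dmat_bound)
  have F2: "integrable P (\<lambda>\<omega>. (fstar (X i \<omega>))\<^sup>2)" for i
    using integrable_distr_eq[of "X i" P borel "\<lambda>x. (fstar x)\<^sup>2"] fstar_L2 unfolding X_distr by simp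
  have FF: "integrable P (\<lambda>\<omega>. fstar (X i \<omega>) * fstar (X j \<omega>))" for i j
    by (rule integrable_L2_prod[OF F2 F2]) measurable
  have Fx: "integrable P (\<lambda>\<omega>. fstar (X i \<omega>) * \<xi> j \<omega>)" for i j
    by (rule integrable_L2_prod[OF F2 \<xi>_L2]) measurable
  have xx: "integrable P (\<lambda>\<omega>. \<xi> i \<omega> * \<xi> j \<omega>)" for i j
    by (rule integrable_L2_prod[OF \<xi>_L2 \<xi>_L2]) measurable
  have zero: "(\<integral>\<omega>. \<phi> \<omega> * \<xi> c \<omega> \<partial>P) = 0"
    if "\<phi> \<in> borel_measurable G" "integrable P (\<lambda>\<omega>. \<phi> \<omega> * \<xi> c \<omega>)" for \<phi> c
  proof -
    have "(\<integral>\<omega>. \<phi> \<omega> * \<xi> c \<omega> \<partial>P) = (\<integral>\<omega>. \<phi> \<omega> * real_cond_exp P G (\<xi> c) \<omega> \<partial>P)"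
      by (rule C.real_cond_exp_intg(2)[symmetric, OF that(2) that(1)]) measurable
    also have "\<dots> = (\<integral>\<omega>. 0 \<partial>P)"
    proof (rule integral_cong_AE)
      show "(\<lambda>\<omega>. \<phi> \<omega> * real_cond_exp P G (\<xi> c) \<omega>) \<in> borel_measurable P"
        using measurable_from_subalg[OF C.subalg that(1)] by measurable
      show "AE \<omega> in P. \<phi> \<omega> * real_cond_exp P G (\<xi> c) \<omega> = 0" using nm[of c] by auto
    qed simp
    finally show ?thesis by simp
  qed
  define Y where "Y \<omega> = (\<chi> i. fstar (X i \<omega>) + \<xi> i \<omega>)" for \<omega>
  define F where "F \<omega> = (\<chi> i. fstar (X i \<omega>))" for \<omega>
  define Dl where "Dl \<omega> = (\<Sum>i\<in>UNIV. \<Sum>j\<in>UNIV. Y \<omega> $ i * Y \<omega> $ j * D \<omega> i j)" for \<omega>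
  define Sf where "Sf \<omega> = (\<Sum>i\<in>UNIV. \<Sum>j\<in>UNIV. F \<omega> $ i * F \<omega> $ j * D \<omega> i j)" for \<omega>
  have term_split: "Y \<omega> $ i * Y \<omega> $ j * D \<omega> i j =
      ((fstar (X i \<omega>) * fstar (X j \<omega>)) * D \<omega> i j + (fstar (X i \<omega>) * D \<omega> i j) * \<xi> j \<omega>)
      + ((fstar (X j \<omega>) * D \<omega> i j) * \<xi> i \<omega> + D \<omega> i j * (\<xi> i \<omega> * \<xi> j \<omega>))" for \<omega> i j
    unfolding Y_def by (simp add: algebra_simps)
  have i_FF: "integrable P (\<lambda>\<omega>. (fstar (X i \<omega>) * fstar (X j \<omega>)) * D \<omega> i j)" for i j
    using integrable_bdd_mult[OF FF[of i j] DP Db] by (simp add: mult.commute)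
  have i_Fx1: "integrable P (\<lambda>\<omega>. (fstar (X i \<omega>) * D \<omega> i j) * \<xi> j \<omega>)" for i j
    using integrable_bdd_mult[OF Fx[of i j] DP Db] by (simp add: mult_ac)
  have i_Fx2: "integrable P (\<lambda>\<omega>. (fstar (X j \<omega>) * D \<omega> i j) * \<xi> i \<omega>)" for i j
    using integrable_bdd_mult[OF Fx[of j i] DP Db] by (simp add: mult_ac)
  have i_xx: "integrable P (\<lambda>\<omega>. D \<omega> i j * (\<xi> i \<omega> * \<xi> j \<omega>))" for i j
    by (rule integrable_bdd_mult[OF xx DP Db])
  have i_term: "integrable P (\<lambda>\<omega>. Y \<omega> $ i * Y \<omega> $ j * D \<omega> i j)" for i j
    unfolding term_split using i_FF i_Fx1 i_Fx2 i_xx by simp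
  have term_int: "(\<integral>\<omega>. Y \<omega> $ i * Y \<omega> $ j * D \<omega> i j \<partial>P)
      = (\<integral>\<omega>. (fstar (X i \<omega>) * fstar (X j \<omega>)) * D \<omega> i j \<partial>P) + (if i = j then \<sigma>\<^sup>2 else 0) * (\<integral>\<omega>. D \<omega> i j \<partial>P)" for i j
  proof -
    have z1: "(\<integral>\<omega>. (fstar (X i \<omega>) * D \<omega> i j) * \<xi> j \<omega> \<partial>P) = 0"
      by (rule zero[OF _ i_Fx1]) (use DG in measurable)
    have z2: "(\<integral>\<omega>. (fstar (X j \<omega>) * D \<omega> i j) * \<xi> i \<omega> \<partial>P) = 0"
      by (rule zero[OF _ i_Fx2]) (use DG in measurable)
    have z3: "(\<integral>\<omega>. D \<omega> i j * (\<xi> i \<omega> * \<xi> j \<omega>) \<partial>P) = (if i = j then \<sigma>\<^sup>2 else 0) * (\<integral>\<omega>. D \<omega> i j \<partial>P)"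
    proof -
      have "(\<integral>\<omega>. D \<omega> i j * (\<xi> i \<omega> * \<xi> j \<omega>) \<partial>P)
          = (\<integral>\<omega>. D \<omega> i j * real_cond_exp P G (\<lambda>\<omega>. \<xi> i \<omega> * \<xi> j \<omega>) \<omega> \<partial>P)"
        by (rule C.real_cond_exp_intg(2)[symmetric, OF i_xx DG]) measurable
      also have "\<dots> = (\<integral>\<omega>. D \<omega> i j * (if i = j then \<sigma>\<^sup>2 else 0) \<partial>P)"
      proof (rule integral_cong_AE)
        show "(\<lambda>\<omega>. D \<omega> i j * real_cond_exp P G (\<lambda>\<omega>. \<xi> i \<omega> * \<xi> j \<omega>) \<omega>) \<in> borel_measurable P"
          by measurable
        show "AE \<omega> in P. D \<omega> i j * real_cond_exp P G (\<lambda>\<omega>. \<xi> i \<omega> * \<xi> j \<omega>) \<omega> = D \<omega> i j * (if i = j then \<sigma>\<^sup>2 else 0)"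
          using nc[of i j] by auto
      qed measurable
      also have "\<dots> = (if i = j then \<sigma>\<^sup>2 else 0) * (\<integral>\<omega>. D \<omega> i j \<partial>P)" by (simp add: mult.commute)
      finally show ?thesis .
    qed
    show ?thesis unfolding term_split
      using i_FF i_Fx1 i_Fx2 i_xx z1 z2 z3 by simp
  qed
  have DlI: "integrable P Dl" unfolding Dl_def using i_term by simp
  have SfI: "integrable P Sf" unfolding Sf_def F_def using i_FF by (simp add: mult.commute)
  have intDl: "(\<integral>\<omega>. Dl \<omega> \<partial>P) = (\<integral>\<omega>. Sf \<omega> \<partial>P) + \<sigma>\<^sup>2 * (\<Sum>i\<in>UNIV. \<integral>\<omega>. D \<omega> i i \<partial>P)"
  proof -
    have "(\<integral>\<omega>. Dl \<omega> \<partial>P) = (\<Sum>i\<in>UNIV. \<Sum>j\<in>UNIV. \<integral>\<omega>. Y \<omega> $ i * Y \<omega> $ j * D \<omega> i j \<partial>P)"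
      unfolding Dl_def using i_term by (simp add: Bochner_Integration.integral_sum)
    also have "\<dots> = (\<Sum>i\<in>UNIV. \<Sum>j\<in>UNIV. \<integral>\<omega>. (fstar (X i \<omega>) * fstar (X j \<omega>)) * D \<omega> i j \<partial>P)
        + (\<Sum>i\<in>UNIV. \<Sum>j\<in>UNIV. (if i = j then \<sigma>\<^sup>2 else 0) * (\<integral>\<omega>. D \<omega> i j \<partial>P))"
      unfolding term_int by (simp add: sum.distrib)
    also have "(\<Sum>i\<in>UNIV. \<Sum>j\<in>UNIV. \<integral>\<omega>. (fstar (X i \<omega>) * fstar (X j \<omega>)) * D \<omega> i j \<partial>P) = (\<integral>\<omega>. Sf \<omega> \<partial>P)"
      unfolding Sf_def F_def using i_FF by (simp add: Bochner_Integration.integral_sum mult.commute)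
    also have "(\<Sum>i\<in>UNIV. \<Sum>j\<in>UNIV. (if i = j then \<sigma>\<^sup>2 else 0) * (\<integral>\<omega>. D \<omega> i j \<partial>P)) = \<sigma>\<^sup>2 * (\<Sum>i\<in>UNIV. \<integral>\<omega>. D \<omega> i i \<partial>P)"
    proof -
      have d: "(\<Sum>j\<in>UNIV. (if i = j then \<sigma>\<^sup>2 else 0) * (\<integral>\<omega>. D \<omega> i j \<partial>P)) = \<sigma>\<^sup>2 * (\<integral>\<omega>. D \<omega> i i \<partial>P)" for i
      proof -
        have "(\<Sum>j\<in>UNIV. (if i = j then \<sigma>\<^sup>2 else 0) * (\<integral>\<omega>. D \<omega> i j \<partial>P))
            = (\<Sum>j\<in>UNIV. if i = j then \<sigma>\<^sup>2 * (\<integral>\<omega>. D \<omega> i j \<partial>P) else 0)"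
          by (intro sum.cong) auto
        also have "\<dots> = \<sigma>\<^sup>2 * (\<integral>\<omega>. D \<omega> i i \<partial>P)" by (simp add: sum.delta)
        finally show ?thesis .
      qed
      show ?thesis unfolding d by (simp add: sum_distrib_left)
    qed
    finally show ?thesis .
  qed
  have L2nn: "0 \<le> L2_norm_sq \<mu> f" for f unfolding L2_norm_sq_def by (rule integral_nonneg_AE) simp
  have rd: "risk Q Xt \<xi>t fstar (krr k \<rho> (\<lambda>i. X i \<omega>) (\<chi> i. fstar (X i \<omega>) + \<xi> i \<omega>))
      - risk Q Xt \<xi>t fstar (orbit_avg lam act (krr k \<rho> (\<lambda>i. X i \<omega>) (\<chi> i. fstar (X i \<omega>) + \<xi> i \<omega>))) = Dl \<omega>" for \<omega>
    unfolding Dl_def D_def Y_def Xv_def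
    by (rule S.risk_diff[OF Q_prob Xt_meas \<xi>t_meas Xt_distr \<xi>t_L2 test_noise_mean test_noise_var fstar_meas fstar_L2 fstar_inv])
  have Dl_eq: "L2_norm_sq \<mu> (\<lambda>x. krr k \<rho> (\<lambda>i. X i \<omega>) (Y \<omega>) x - orbit_avg lam act (krr k \<rho> (\<lambda>i. X i \<omega>) (Y \<omega>)) x) = Dl \<omega>" for \<omega>
    unfolding Dl_def D_def Xv_def by (rule S.S_eq)
  have Dl_nn: "0 \<le> Dl \<omega>" for \<omega> using L2nn Dl_eq by metis
  have Sf_eq: "L2_norm_sq \<mu> (\<lambda>x. krr k \<rho> (\<lambda>i. X i \<omega>) (\<chi> i. fstar (X i \<omega>)) x
        - orbit_avg lam act (krr k \<rho> (\<lambda>i. X i \<omega>) (\<chi> i. fstar (X i \<omega>))) x) = Sf \<omega>" for \<omega>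
    unfolding Sf_def D_def Xv_def F_def by (rule S.S_eq)
  have Sf_nn: "0 \<le> Sf \<omega>" for \<omega> using L2nn Sf_eq by metis
  define L where "L = L2_norm_sq2 \<mu> (kperp lam act k)"
  define R where "R = real CARD('n) * S.Mk + \<rho>"
  have Rpos: "0 < R" unfolding R_def using S.Mk_nonneg \<rho>_pos by (intro add_nonneg_pos) simp_all
  have fmP: "finite_measure P" using P_prob by (simp add: prob_space_def)
  have VI: "(\<integral>\<omega>. Vfun lam act \<mu> k (X l \<omega>) \<partial>P) = L" for l
  proof -
    have "(\<integral>\<omega>. Vfun lam act \<mu> k (X l \<omega>) \<partial>P) = (\<integral>y. Vfun lam act \<mu> k y \<partial>distr P borel (X l))"
      by (rule integral_distr[symmetric]) measurable
    then show ?thesis unfolding X_distr L_def L2_norm_sq2_def Vfun_def .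
  qed
  have Vint: "integrable P (\<lambda>\<omega>. Vfun lam act \<mu> k (X l \<omega>))" for l
    by (rule integrable_bdd[OF fmP _ S.Vfun_bound]) measurable
  have Dint: "integrable P (\<lambda>\<omega>. D \<omega> i j)" for i j
    by (rule integrable_bdd[OF fmP DP Db])
  have tr: "real CARD('n) * L \<le> R\<^sup>2 * (\<Sum>j\<in>UNIV. \<integral>\<omega>. D \<omega> j j \<partial>P)"
  proof -
    have "(\<integral>\<omega>. (\<Sum>l\<in>UNIV. Vfun lam act \<mu> k (X l \<omega>)) \<partial>P) \<le> (\<integral>\<omega>. R\<^sup>2 * (\<Sum>j\<in>UNIV. D \<omega> j j) \<partial>P)"
    proof (rule integral_mono)
      show "integrable P (\<lambda>\<omega>. \<Sum>l\<in>UNIV. Vfun lam act \<mu> k (X l \<omega>))" using Vint by simp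
      show "integrable P (\<lambda>\<omega>. R\<^sup>2 * (\<Sum>j\<in>UNIV. D \<omega> j j))" using Dint by simp
      show "(\<Sum>l\<in>UNIV. Vfun lam act \<mu> k (X l \<omega>)) \<le> R\<^sup>2 * (\<Sum>j\<in>UNIV. D \<omega> j j)" for \<omega>
        using S.trace_ineq[of "Xv \<omega>"] unfolding R_def D_def Xv_def by simp
    qed
    moreover have "(\<integral>\<omega>. (\<Sum>l\<in>UNIV. Vfun lam act \<mu> k (X l \<omega>)) \<partial>P) = real CARD('n) * L"
      using Vint by (simp add: Bochner_Integration.integral_sum VI)
    moreover have "(\<integral>\<omega>. R\<^sup>2 * (\<Sum>j\<in>UNIV. D \<omega> j j) \<partial>P) = R\<^sup>2 * (\<Sum>j\<in>UNIV. \<integral>\<omega>. D \<omega> j j \<partial>P)"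
    proof -
      have s: "(\<integral>\<omega>. (\<Sum>j\<in>UNIV. D \<omega> j j) \<partial>P) = (\<Sum>j\<in>UNIV. \<integral>\<omega>. D \<omega> j j \<partial>P)"
        by (rule Bochner_Integration.integral_sum) (rule Dint)
      show ?thesis by (simp only: integral_mult_right_zero s)
    qed
    ultimately show ?thesis by linarith
  qed
  have L_nn: "0 \<le> L" unfolding L_def L2_norm_sq2_def
    by (rule integral_nonneg_AE) (simp add: integral_nonneg_AE)
  define c where "c = \<sigma>\<^sup>2 * L2_norm_sq2 \<mu> (kperp lam act k)
                 / (sqrt (real CARD('n)) * (SUP x. k x x) + \<rho> / sqrt (real CARD('n)))\<^sup>2"
  have c_eq: "c = \<sigma>\<^sup>2 * (real CARD('n) * L / R\<^sup>2)"
  proof -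
    have sn: "0 < sqrt (real CARD('n))" by simp
    have "sqrt (real CARD('n)) * S.Mk + \<rho> / sqrt (real CARD('n)) = R / sqrt (real CARD('n))"
      unfolding R_def using sn by (simp add: field_simps)
    then have "(sqrt (real CARD('n)) * S.Mk + \<rho> / sqrt (real CARD('n)))\<^sup>2 = R\<^sup>2 / real CARD('n)"
      by (simp add: power_divide)
    then show ?thesis unfolding c_def L_def[symmetric] S.Mk_def[symmetric] by simp
  qed
  have c_nn: "0 \<le> c" unfolding c_eq using L_nn Rpos by simp
  have c_le: "c \<le> \<sigma>\<^sup>2 * (\<Sum>j\<in>UNIV. \<integral>\<omega>. D \<omega> j j \<partial>P)"
  proof -
    have "real CARD('n) * L / R\<^sup>2 \<le> (\<Sum>j\<in>UNIV. \<integral>\<omega>. D \<omega> j j \<partial>P)"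
      using tr Rpos by (simp add: divide_le_eq mult.commute)
    then show ?thesis unfolding c_eq by (rule mult_left_mono) simp
  qed
  have lhs: "(\<integral>\<^sup>+ \<omega>. ennreal (Dl \<omega>) \<partial>P) \<le> (\<integral>\<^sup>+ \<omega>. ennreal (risk Q Xt \<xi>t fstar (krr k \<rho> (\<lambda>i. X i \<omega>) (\<chi> i. fstar (X i \<omega>) + \<xi> i \<omega>))
                        - risk Q Xt \<xi>t fstar (f' \<omega>)) \<partial>P)"
  proof (rule nn_integral_mono)
    fix \<omega> assume "\<omega> \<in> space P"
    then show "ennreal (Dl \<omega>) \<le> ennreal (risk Q Xt \<xi>t fstar (krr k \<rho> (\<lambda>i. X i \<omega>) (\<chi> i. fstar (X i \<omega>) + \<xi> i \<omega>))
                        - risk Q Xt \<xi>t fstar (f' \<omega>))"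
      using f'_better[of \<omega>] rd[of \<omega>] by (intro ennreal_leI) linarith
  qed
  have e1: "(\<integral>\<^sup>+ \<omega>. ennreal (Dl \<omega>) \<partial>P) = ennreal (\<integral>\<omega>. Dl \<omega> \<partial>P)"
    by (rule nn_integral_eq_integral[OF DlI]) (simp add: Dl_nn)
  have e2: "(\<integral>\<^sup>+ \<omega>. ennreal (L2_norm_sq \<mu>
                 (\<lambda>x. krr k \<rho> (\<lambda>i. X i \<omega>) (\<chi> i. fstar (X i \<omega>)) x
                      - orbit_avg lam act (krr k \<rho> (\<lambda>i. X i \<omega>) (\<chi> i. fstar (X i \<omega>))) x)) \<partial>P)
      = ennreal (\<integral>\<omega>. Sf \<omega> \<partial>P)"
    unfolding Sf_eq by (rule nn_integral_eq_integral[OF SfI]) (simp add: Sf_nn)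
  have Sint_nn: "0 \<le> (\<integral>\<omega>. Sf \<omega> \<partial>P)" by (rule integral_nonneg_AE) (simp add: Sf_nn)
  have "ennreal (\<integral>\<omega>. Sf \<omega> \<partial>P) + ennreal c = ennreal ((\<integral>\<omega>. Sf \<omega> \<partial>P) + c)"
    using Sint_nn c_nn by (simp add: ennreal_plus)
  also have "\<dots> \<le> ennreal (\<integral>\<omega>. Dl \<omega> \<partial>P)"
    using c_le unfolding intDl by (intro ennreal_leI) simp
  also have "\<dots> = (\<integral>\<^sup>+ \<omega>. ennreal (Dl \<omega>) \<partial>P)" by (rule e1[symmetric])
  also note lhs
  finally show ?thesis unfolding e2 c_def .
qed

end
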